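(* Let $(E,(\cdot,\cdot),\mathcal H)$ be an extended affine Lie algebra with root system $R$, and let $\mathcal H_R$ and $\hat E=\mathcal H_R+E_c$ be as in the context. If $E$ is tame, then the orthogonal complement $\mathcal H_R^\perp$ of $\mathcal H_R$ in $\mathcal H$ is $\{0\}$ and $\hat E=\mathcal H+E_c$.
   Context: All Lie algebras are over $\mathbb C$. An extended affine Lie algebra (EALA) is a triple $(E,(\cdot,\cdot),\mathcal H)$ where $E$ is a Lie algebra, $\mathcal H$ a subalgebra and $(\cdot,\cdot)$ a bilinear form on $E$ such that: (EA1) symmetric, non-degenerate, invariant form; (EA2) $\mathcal H$ finite-dimensional, $E=\bigoplus_{\alpha\in\mathcal H^*}E_\alpha$, $E_\alpha=\{x:[h,x]=\alpha(h)x\ \forall h\in\mathcal H\}$, $E_0=\mathcal H$; root system $R=\{\alpha:E_\alpha\neq0\}$; $t_\alpha\in\mathcal H$ given by $\alpha(h)=(h,t_\alpha)$, $(\alpha,\beta):=(t_\alpha,t_\beta)$, $R^\times=\{\alpha\in R:(\alpha,\alpha)\neq0\}$, $R^0=R\setminus R^\times$; (EA3) $\mathrm{ad}\,x$ locally nilpotent for $x\in E_\alpha$, $\alpha\in R^\times$; (EA4) $R$ discrete; (EA5) $R^\times$ connected (not a union of two nonempty mutually orthogonal subsets) and every isotropic root non-isolated. Let $\mathcal V=\mathrm{span}_{\mathbb R}R$, $\mathcal V^0=\mathrm{span}_{\mathbb R}R^0$; the image $\bar R$ of $R$ in $\mathcal V/\mathcal V^0$ is an irreducible finite root system, assumed reduced.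 The core $E_c$ is the subalgebra generated by the $E_\alpha$, $\alpha\in R^\times$; $E$ is tame if $E_c^\perp\subseteq Z(E_c)$. Fix a finite root system $\dot R\subseteq R$ (containing $0$) with $R\subseteq\dot R+\mathcal V^0$ mapping bijectively onto $\bar R$. Put $\dot{\mathcal H}=\sum_{\dot\alpha\in\dot R}\mathbb Ct_{\dot\alpha}$, $\mathcal H_c=\sum_{\alpha\in R^\times}\mathbb Ct_\alpha$, $\mathcal H^0=\sum_{\sigma\in R^0}\mathbb Ct_\sigma$. Choose $\hat{\mathcal H}^0$ in the orthogonal complement of $\dot{\mathcal H}$ in $\mathcal H$ with $\dim\hat{\mathcal H}^0=\dim\mathcal H^0$, $(\hat{\mathcal H}^0,\hat{\mathcal H}^0)=0$ and the form non-degenerate on $\mathcal H^0\oplus\hat{\mathcal H}^0$; set $\mathcal H_R=\mathcal H_c\oplus\hat{\mathcal H}^0$ and $\hat E=\mathcal H_R+E_c$. *)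

theory Defs
  imports "HOL-Analysis.Analysis"
begin

text \<open>Complex vector spaces are modelled by an abelian group type 'a together with a
scalar multiplication sc satisfying the vector space axioms over the complex field
(locale vector_space from HOL.Vector_Spaces).\<close>

definition ssum :: "'a::ab_group_add set \<Rightarrow> 'a set \<Rightarrow> 'a set" where
  "ssum A B = {a + b | a b. a \<in> A \<and> b \<in> B}"

definition cbilinear :: "(complex \<Rightarrow> 'a::ab_group_add \<Rightarrow> 'a) \<Rightarrow> ('a \<Rightarrow> 'a \<Rightarrow> 'a) \<Rightarrow> bool" where
  "cbilinear sc f \<longleftrightarrow>
     (\<forall>x y z. f (x + y) z = f x z + f y z) \<and> (\<forall>x y z. f x (y + z) = f x y + f x z) \<and>
     (\<forall>c x y. f (sc c x) y = sc c (f x y)) \<and> (\<forall>c x y. f x (sc c y) = sc c (f x y))"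

definition cbilinear_form :: "(complex \<Rightarrow> 'a::ab_group_add \<Rightarrow> 'a) \<Rightarrow> ('a \<Rightarrow> 'a \<Rightarrow> complex) \<Rightarrow> bool" where
  "cbilinear_form sc f \<longleftrightarrow>
     (\<forall>x y z. f (x + y) z = f x z + f y z) \<and> (\<forall>x y z. f x (y + z) = f x y + f x z) \<and>
     (\<forall>c x y. f (sc c x) y = c * f x y) \<and> (\<forall>c x y. f x (sc c y) = c * f x y)"

definition lie_algebra :: "(complex \<Rightarrow> 'a::ab_group_add \<Rightarrow> 'a) \<Rightarrow> ('a \<Rightarrow> 'a \<Rightarrow> 'a) \<Rightarrow> bool" where
  "lie_algebra sc br \<longleftrightarrow> vector_space sc \<and> cbilinear sc br \<and> (\<forall>x. br x x = 0) \<and>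
     (\<forall>x y z. br x (br y z) + br y (br z x) + br z (br x y) = 0)"

definition subalgebra :: "(complex \<Rightarrow> 'a::ab_group_add \<Rightarrow> 'a) \<Rightarrow> ('a \<Rightarrow> 'a \<Rightarrow> 'a) \<Rightarrow> 'a set \<Rightarrow> bool" where
  "subalgebra sc br S \<longleftrightarrow> module.subspace sc S \<and> (\<forall>x\<in>S. \<forall>y\<in>S. br x y \<in> S)"

text \<open>Linear functionals on H (elements of H-dual), represented extensionally
(value 0 outside H).\<close>
definition Hdual :: "(complex \<Rightarrow> 'a::ab_group_add \<Rightarrow> 'a) \<Rightarrow> 'a set \<Rightarrow> ('a \<Rightarrow> complex) set" where
  "Hdual sc H = {\<alpha>. (\<forall>x\<in>H. \<forall>y\<in>H. \<alpha> (x + y) = \<alpha> x + \<alpha> y) \<and>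
                    (\<forall>c. \<forall>x\<in>H. \<alpha> (sc c x) = c * \<alpha> x) \<and> (\<forall>x. x \<notin> H \<longrightarrow> \<alpha> x = 0)}"

definition rootsp :: "(complex \<Rightarrow> 'a::ab_group_add \<Rightarrow> 'a) \<Rightarrow> ('a \<Rightarrow> 'a \<Rightarrow> 'a) \<Rightarrow> 'a set \<Rightarrow> ('a \<Rightarrow> complex) \<Rightarrow> 'a set" where
  "rootsp sc br H \<alpha> = {x. \<forall>h\<in>H. br h x = sc (\<alpha> h) x}"

definition roots :: "(complex \<Rightarrow> 'a::ab_group_add \<Rightarrow> 'a) \<Rightarrow> ('a \<Rightarrow> 'a \<Rightarrow> 'a) \<Rightarrow> 'a set \<Rightarrow> ('a \<Rightarrow> complex) set" where
  "roots sc br H = {\<alpha> \<in> Hdual sc H. rootsp sc br H \<alpha> \<noteq> {0}}"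

definition tvec :: "('a \<Rightarrow> 'a \<Rightarrow> complex) \<Rightarrow> 'a set \<Rightarrow> ('a \<Rightarrow> complex) \<Rightarrow> 'a" where
  "tvec B H \<alpha> = (THE t. t \<in> H \<and> (\<forall>h\<in>H. \<alpha> h = B h t))"

definition dform :: "('a \<Rightarrow> 'a \<Rightarrow> complex) \<Rightarrow> 'a set \<Rightarrow> ('a \<Rightarrow> complex) \<Rightarrow> ('a \<Rightarrow> complex) \<Rightarrow> complex" where
  "dform B H \<alpha> \<beta> = B (tvec B H \<alpha>) (tvec B H \<beta>)"

definition nonisotropic_roots where
  "nonisotropic_roots sc br B H = {\<alpha> \<in> roots sc br H. dform B H \<alpha> \<alpha> \<noteq> 0}"

definition isotropic_roots where
  "isotropic_roots sc br B H = roots sc br H - nonisotropic_roots sc br B H"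

definition rspan :: "('a \<Rightarrow> complex) set \<Rightarrow> ('a \<Rightarrow> complex) set" where
  "rspan S = {(\<lambda>x. \<Sum>\<alpha>\<in>F. complex_of_real (c \<alpha>) * \<alpha> x) | F c. finite F \<and> F \<subseteq> S}"

text \<open>Discreteness of a subset of H-dual (H finite-dimensional): the natural topology on
H-dual is the topology of pointwise convergence on H.\<close>
definition discrete_dual :: "'a set \<Rightarrow> ('a \<Rightarrow> complex) set \<Rightarrow> bool" where
  "discrete_dual H S \<longleftrightarrow> (\<forall>\<alpha>\<in>S. \<exists>F e. finite F \<and> F \<subseteq> H \<and> e > 0 \<and>
       (\<forall>\<beta>\<in>S. (\<forall>h\<in>F. cmod (\<beta> h - \<alpha> h) < e) \<longrightarrow> \<beta> = \<alpha>))"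

definition EALA :: "(complex \<Rightarrow> 'a::ab_group_add \<Rightarrow> 'a) \<Rightarrow> ('a \<Rightarrow> 'a \<Rightarrow> 'a) \<Rightarrow>
     ('a \<Rightarrow> 'a \<Rightarrow> complex) \<Rightarrow> 'a set \<Rightarrow> bool" where
  "EALA sc br B H \<longleftrightarrow>
     lie_algebra sc br \<and> subalgebra sc br H \<and>
     \<comment> \<open>EA1\<close>
     cbilinear_form sc B \<and> (\<forall>x y. B x y = B y x) \<and> (\<forall>x. (\<forall>y. B x y = 0) \<longrightarrow> x = 0) \<and>
     (\<forall>x y z. B (br x y) z = B x (br y z)) \<and>
     \<comment> \<open>EA2\<close>
     (\<exists>F. finite F \<and> F \<subseteq> H \<and> module.span sc F = H) \<and>
     (\<forall>x. \<exists>S f. finite S \<and> S \<subseteq> Hdual sc H \<and> (\<forall>\<alpha>\<in>S. f \<alpha> \<in> rootsp sc br H \<alpha>) \<and> x = (\<Sum>\<alpha>\<in>S. f \<alpha>)) \<and>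
     (\<forall>S f. finite S \<and> S \<subseteq> Hdual sc H \<and> (\<forall>\<alpha>\<in>S. f \<alpha> \<in> rootsp sc br H \<alpha>) \<and> (\<Sum>\<alpha>\<in>S. f \<alpha>) = 0
        \<longrightarrow> (\<forall>\<alpha>\<in>S. f \<alpha> = 0)) \<and>
     rootsp sc br H (\<lambda>_. 0) = H \<and>
     \<comment> \<open>EA3\<close>
     (\<forall>\<alpha>\<in>nonisotropic_roots sc br B H. \<forall>x\<in>rootsp sc br H \<alpha>. \<forall>y. \<exists>n. (br x ^^ n) y = 0) \<and>
     \<comment> \<open>EA4\<close>
     discrete_dual H (roots sc br H) \<and>
     \<comment> \<open>EA5\<close>
     \<not> (\<exists>P Q. P \<noteq> {} \<and> Q \<noteq> {} \<and> P \<union> Q = nonisotropic_roots sc br B H \<and>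
            (\<forall>\<alpha>\<in>P. \<forall>\<beta>\<in>Q. dform B H \<alpha> \<beta> = 0)) \<and>
     (\<forall>\<sigma>\<in>isotropic_roots sc br B H. \<exists>\<alpha>\<in>nonisotropic_roots sc br B H. (\<lambda>x. \<sigma> x + \<alpha> x) \<in> roots sc br H)"

definition core where
  "core sc br B H = \<Inter>{S. subalgebra sc br S \<and>
      (\<Union>\<alpha>\<in>nonisotropic_roots sc br B H. rootsp sc br H \<alpha>) \<subseteq> S}"

definition orth :: "('a \<Rightarrow> 'a \<Rightarrow> complex) \<Rightarrow> 'a set \<Rightarrow> 'a set \<Rightarrow> 'a set" where
  "orth B U S = {x \<in> U. \<forall>y\<in>S. B x y = 0}"

definition centre :: "('a::zero \<Rightarrow> 'a \<Rightarrow> 'a) \<Rightarrow> 'a set \<Rightarrow> 'a set" where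
  "centre br S = {x \<in> S. \<forall>y\<in>S. br x y = 0}"

definition tame where
  "tame sc br B H \<longleftrightarrow> orth B UNIV (core sc br B H) \<subseteq> centre br (core sc br B H)"

definition finite_root_system :: "('a \<Rightarrow> 'a \<Rightarrow> complex) \<Rightarrow> 'a set \<Rightarrow> ('a \<Rightarrow> complex) set \<Rightarrow> bool" where
  "finite_root_system B H S \<longleftrightarrow> finite S \<and> (\<lambda>_. 0) \<in> S \<and>
     (\<forall>v\<in>rspan S. v \<noteq> (\<lambda>_. 0) \<longrightarrow> dform B H v v \<in> \<real> \<and> Re (dform B H v v) > 0) \<and>
     (\<forall>\<alpha>\<in>S - {\<lambda>_. 0}. \<forall>\<beta>\<in>S. 2 * dform B H \<beta> \<alpha> / dform B H \<alpha> \<alpha> \<in> \<int> \<and>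
        (\<lambda>x. \<beta> x - (2 * dform B H \<beta> \<alpha> / dform B H \<alpha> \<alpha>) * \<alpha> x) \<in> S)"

end

theory Submission
  imports Defs
begin

locale ectx = vector_space sc for sc :: "complex \<Rightarrow> 'a::ab_group_add \<Rightarrow> 'a" +
  fixes br :: "'a \<Rightarrow> 'a \<Rightarrow> 'a" and B :: "'a \<Rightarrow> 'a \<Rightarrow> complex" and H :: "'a set"
  assumes E: "EALA sc br B H"
begin

lemma lie: "lie_algebra sc br" using E unfolding EALA_def by (elim conjE) assumption
lemma br_addL: "br (x + y) z = br x z + br y z" using lie unfolding lie_algebra_def cbilinear_def by blast
lemma br_addR: "br x (y + z) = br x y + br x z" using lie unfolding lie_algebra_def cbilinear_def by blast
lemma br_scL: "br (sc c x) y = sc c (br x y)" using lie unfolding lie_algebra_def cbilinear_def by blast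
lemma br_scR: "br x (sc c y) = sc c (br x y)" using lie unfolding lie_algebra_def cbilinear_def by blast
lemma br_self: "br x x = 0" using lie unfolding lie_algebra_def by blast
lemma jacobi: "br x (br y z) + br y (br z x) + br z (br x y) = 0" using lie unfolding lie_algebra_def by blast
lemma br_0L[simp]: "br 0 x = 0" using br_addL[of 0 0 x] by simp
lemma br_0R[simp]: "br x 0 = 0" using br_addR[of x 0 0] by simp
lemma br_anti: "br x y = - br y x"
proof -
  have "br (x+y) (x+y) = br x x + br x y + (br y x + br y y)" by (simp add: br_addL br_addR)
  then have "br x y + br y x = 0" by (simp add: br_self)
  then show ?thesis by (simp add: eq_neg_iff_add_eq_0)
qed
lemma br_negR: "br x (- y) = - br x y" using br_addR[of x y "-y"] by (simp add: add_eq_0_iff)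
lemma br_deriv: "br h (br x y) = br (br h x) y + br x (br h y)"
proof -
  have j: "br h (br x y) + br x (br y h) + br y (br h x) = 0" by (rule jacobi)
  have 1: "br x (br y h) = - br x (br h y)" by (subst br_anti[of y h]) (simp add: br_negR)
  have 2: "br y (br h x) = - br (br h x) y" by (rule br_anti)
  from j show ?thesis unfolding 1 2 by (simp add: algebra_simps add_eq_0_iff)
qed
lemma br_diffR: "br x (y - z) = br x y - br x z"
  using br_addR[of x "y - z" z] by (simp add: algebra_simps)
lemma br_diffL: "br (y - z) x = br y x - br z x"
  using br_addL[of "y - z" z x] by (simp add: algebra_simps)

lemma Bf: "cbilinear_form sc B" using E unfolding EALA_def by (elim conjE) assumption
lemma B_addL: "B (x + y) z = B x z + B y z" using Bf unfolding cbilinear_form_def by blast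
lemma B_addR: "B x (y + z) = B x y + B x z" using Bf unfolding cbilinear_form_def by blast
lemma B_scL: "B (sc c x) y = c * B x y" using Bf unfolding cbilinear_form_def by blast
lemma B_scR: "B x (sc c y) = c * B x y" using Bf unfolding cbilinear_form_def by blast
lemma B_sym0: "\<forall>x y. B x y = B y x" using E unfolding EALA_def by (elim conjE) assumption
lemma B_sym: "B x y = B y x" by (rule B_sym0[rule_format])
lemma B_nd0: "\<forall>x. (\<forall>y. B x y = 0) \<longrightarrow> x = 0" using E unfolding EALA_def by (elim conjE) assumption
lemma B_nd: "(\<And>y. B x y = 0) \<Longrightarrow> x = 0" using B_nd0 by blast
lemma B_inv0: "\<forall>x y z. B (br x y) z = B x (br y z)" using E unfolding EALA_def by (elim conjE) assumption
lemma B_inv: "B (br x y) z = B x (br y z)" by (rule B_inv0[rule_format])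
lemma B_0L[simp]: "B 0 x = 0" using B_addL[of 0 0 x] by simp
lemma B_0R[simp]: "B x 0 = 0" using B_addR[of x 0 0] by simp
lemma B_negL: "B (- x) y = - B x y" using B_addL[of x "-x" y] by (simp add: add_eq_0_iff)
lemma B_negR: "B x (- y) = - B x y" using B_addR[of x y "-y"] by (simp add: add_eq_0_iff)
lemma B_diffL: "B (x - y) z = B x z - B y z" using B_addL[of x "-y" z] by (simp add: B_negL)
lemma B_diffR: "B x (y - z) = B x y - B x z" using B_addR[of x y "-z"] by (simp add: B_negR)
lemma B_sumR: "B x (sum f S) = (\<Sum>i\<in>S. B x (f i))"
  by (induction S rule: infinite_finite_induct) (auto simp: B_addR)
lemma B_sumL: "B (sum f S) x = (\<Sum>i\<in>S. B (f i) x)"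
  by (induction S rule: infinite_finite_induct) (auto simp: B_addL)

lemma subalg: "subalgebra sc br H" using E unfolding EALA_def by (elim conjE) assumption
lemma H_sub: "subspace H" using subalg unfolding subalgebra_def by (elim conjE) assumption
lemma H_fin: "\<exists>F. finite F \<and> F \<subseteq> H \<and> span F = H" using E unfolding EALA_def by (elim conjE) assumption
lemma decomp0: "\<forall>x. \<exists>S f. finite S \<and> S \<subseteq> Hdual sc H \<and> (\<forall>\<alpha>\<in>S. f \<alpha> \<in> rootsp sc br H \<alpha>) \<and> x = (\<Sum>\<alpha>\<in>S. f \<alpha>)"
  using E unfolding EALA_def by (elim conjE) assumption
lemma decomp: "\<exists>S f. finite S \<and> S \<subseteq> Hdual sc H \<and> (\<forall>\<alpha>\<in>S. f \<alpha> \<in> rootsp sc br H \<alpha>) \<and> x = (\<Sum>\<alpha>\<in>S. f \<alpha>)"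
  by (rule decomp0[rule_format])
lemma rootsp0: "rootsp sc br H (\<lambda>_. 0) = H" using E unfolding EALA_def by (elim conjE) assumption
lemma EA30: "\<forall>\<alpha>\<in>nonisotropic_roots sc br B H. \<forall>x\<in>rootsp sc br H \<alpha>. \<forall>y. \<exists>n. (br x ^^ n) y = 0"
  using E unfolding EALA_def by (elim conjE) assumption
lemma EA3: "\<alpha> \<in> nonisotropic_roots sc br B H \<Longrightarrow> x \<in> rootsp sc br H \<alpha> \<Longrightarrow> \<exists>n. (br x ^^ n) y = 0"
  using EA30 by blast
lemma EA50: "\<forall>\<sigma>\<in>isotropic_roots sc br B H. \<exists>\<alpha>\<in>nonisotropic_roots sc br B H. (\<lambda>x. \<sigma> x + \<alpha> x) \<in> roots sc br H"
  using E unfolding EALA_def by (elim conjE) assumption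
lemma EA5: "\<sigma> \<in> isotropic_roots sc br B H \<Longrightarrow> \<exists>\<alpha>\<in>nonisotropic_roots sc br B H. (\<lambda>x. \<sigma> x + \<alpha> x) \<in> roots sc br H"
  using EA50 by blast

lemma sc_0: "sc 0 x = 0" by simp
lemma rootspD: "x \<in> rootsp sc br H \<alpha> \<Longrightarrow> h \<in> H \<Longrightarrow> br h x = sc (\<alpha> h) x"
  unfolding rootsp_def by blast
lemma H_abel: "h \<in> H \<Longrightarrow> h' \<in> H \<Longrightarrow> br h h' = 0"
  using rootspD[of h' "\<lambda>_. 0" h] rootsp0 by simp

lemma rootsp_sub: "subspace (rootsp sc br H \<alpha>)"
  unfolding subspace_def rootsp_def
  by (auto simp: br_addR br_scR scale_right_distrib scale_scale mult.commute)

lemma rootsp_br: assumes x: "x \<in> rootsp sc br H \<alpha>" and y: "y \<in> rootsp sc br H \<beta>"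
  shows "br x y \<in> rootsp sc br H (\<lambda>z. \<alpha> z + \<beta> z)"
  unfolding rootsp_def
proof (intro CollectI ballI)
  fix h assume h: "h \<in> H"
  have "br h (br x y) = br (br h x) y + br x (br h y)" by (rule br_deriv)
  also have "\<dots> = sc (\<alpha> h) (br x y) + sc (\<beta> h) (br x y)"
    using rootspD[OF x h] rootspD[OF y h] by (simp add: br_scL br_scR)
  also have "\<dots> = sc (\<alpha> h + \<beta> h) (br x y)" by (simp add: scale_left_distrib)
  finally show "br h (br x y) = sc (\<alpha> h + \<beta> h) (br x y)" .
qed

lemma Hdual_zero: "(\<lambda>_. 0) \<in> Hdual sc H" unfolding Hdual_def by auto

lemma B_root_orth:
  assumes a: "\<alpha> \<in> Hdual sc H" and b: "\<beta> \<in> Hdual sc H" and x: "x \<in> rootsp sc br H \<alpha>"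
    and y: "y \<in> rootsp sc br H \<beta>" and ne: "(\<lambda>z. \<alpha> z + \<beta> z) \<noteq> (\<lambda>_. 0)"
  shows "B x y = 0"
proof -
  obtain z where z: "\<alpha> z + \<beta> z \<noteq> 0" using ne by auto
  have zH: "z \<in> H"
  proof (rule ccontr)
    assume "z \<notin> H"
    then have "\<alpha> z = 0" "\<beta> z = 0" using a b unfolding Hdual_def by auto
    with z show False by simp
  qed
  have "\<alpha> z * B x y = B (br z x) y" using rootspD[OF x zH] by (simp add: B_scL)
  also have "\<dots> = - B (br x z) y" by (subst br_anti) (simp add: B_negL)
  also have "\<dots> = - B x (br z y)" by (simp add: B_inv)
  also have "\<dots> = - \<beta> z * B x y" using rootspD[OF y zH] by (simp add: B_scR)
  finally have "(\<alpha> z + \<beta> z) * B x y = 0" by (simp add: algebra_simps)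
  with z show ?thesis by simp
qed

lemma H_nd: assumes t: "t \<in> H" and o: "\<forall>h\<in>H. B h t = 0" shows "t = 0"
proof (rule B_nd)
  fix y
  obtain S f where S: "finite S" "S \<subseteq> Hdual sc H" "\<forall>\<alpha>\<in>S. f \<alpha> \<in> rootsp sc br H \<alpha>" "y = (\<Sum>\<alpha>\<in>S. f \<alpha>)"
    using decomp[of y] by blast
  have "B t (f \<alpha>) = 0" if "\<alpha> \<in> S" for \<alpha>
  proof (cases "\<alpha> = (\<lambda>_. 0)")
    case True
    then have "f \<alpha> \<in> H" using S that rootsp0 by auto
    then show ?thesis using o B_sym[of t "f \<alpha>"] by simp
  next
    case False
    have aH: "\<alpha> \<in> Hdual sc H" using that S(2) by blast
    have tr: "t \<in> rootsp sc br H (\<lambda>_. 0)" using t rootsp0 by simp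
    have ne: "(\<lambda>z. 0 + \<alpha> z) \<noteq> (\<lambda>_. 0)" using False by simp
    show ?thesis
      by (rule B_root_orth[OF Hdual_zero aH tr S(3)[rule_format, OF that] ne])
  qed
  then show "B t y = 0" using S(4) by (simp add: B_sumR)
qed

end

context ectx begin

lemma span_ind: "x \<in> span S \<Longrightarrow> subspace {x. P x} \<Longrightarrow> (\<And>x. x \<in> S \<Longrightarrow> P x) \<Longrightarrow> P x"
  using span_subspace_induct[of x S "{x. P x}"] by blast

lemma orth_span:
  assumes "\<forall>s\<in>S. \<forall>t\<in>T. B s t = 0" "x \<in> span S" "y \<in> span T"
  shows "B x y = 0"
proof -
  have sub1: "subspace {x. \<forall>y\<in>span T. B x y = 0}"
    unfolding subspace_def by (auto simp: B_addL B_scL)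
  have "\<forall>y\<in>span T. B x y = 0"
  proof (rule span_ind[OF assms(2) sub1])
    fix x assume x: "x \<in> S"
    have sub2: "subspace {y. B x y = 0}" unfolding subspace_def by (auto simp: B_addR B_scR)
    show "\<forall>y\<in>span T. B x y = 0"
    proof
      fix y assume "y \<in> span T"
      then show "B x y = 0" by (rule span_ind[OF _ sub2]) (use assms(1) x in blast)
    qed
  qed
  then show ?thesis using assms(3) by blast
qed

lemma span_insert_eq: "span A = span C \<Longrightarrow> span (insert w A) = span (insert w C)"
  by (metis span_insert)

lemma orth_basis:
  "finite F \<Longrightarrow> \<exists>Q. finite Q \<and> span Q = span F \<and> (\<forall>p\<in>Q. \<forall>q\<in>Q. p \<noteq> q \<longrightarrow> B p q = 0)"
proof (induction "card F" arbitrary: F rule: less_induct)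
  case less
  show ?case
  proof (cases "\<forall>w\<in>span F. B w w = 0")
    case True
    have "B f g = 0" if "f \<in> F" "g \<in> F" for f g
    proof -
      have "f \<in> span F" "g \<in> span F" "f + g \<in> span F" using that by (auto intro: span_base span_add)
      then have "B (f+g) (f+g) = 0" "B f f = 0" "B g g = 0" using True by auto
      then have "2 * B f g = 0" by (simp add: B_addL B_addR B_sym[of g f])
      then show ?thesis by simp
    qed
    then show ?thesis using less.prems by blast
  next
    case False
    then obtain w where w: "w \<in> span F" "B w w \<noteq> 0" by blast
    define P where "P X \<longleftrightarrow> X \<subseteq> F \<and> w \<in> span X" for X
    have "P F" using w unfolding P_def by auto
    then obtain F0 where F0: "P F0" "\<And>X. P X \<Longrightarrow> card F0 \<le> card X"
      using ex_has_least_nat[of P F card] by blast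
    have fin0: "finite F0" using F0(1) less.prems unfolding P_def by (auto intro: finite_subset)
    have "w \<noteq> 0" using w by auto
    then have "F0 \<noteq> {}" using F0(1) unfolding P_def by auto
    then obtain f0 where f0: "f0 \<in> F0" by blast
    have nw: "w \<notin> span (F0 - {f0})"
    proof
      assume "w \<in> span (F0 - {f0})"
      then have "P (F0 - {f0})" using F0(1) unfolding P_def by auto
      then have "card F0 \<le> card (F0 - {f0})" using F0(2) by blast
      moreover have "card (F0 - {f0}) < card F0" by (rule card_Diff1_less[OF fin0 f0])
      ultimately show False by simp
    qed
    have "w \<in> span (insert f0 (F0 - {f0}))" using F0(1) f0 unfolding P_def by (simp add: insert_absorb)
    from in_span_insert[OF this nw] have "f0 \<in> span (insert w (F0 - {f0}))" .
    moreover have "span (insert w (F0 - {f0})) \<subseteq> span (insert w (F - {f0}))"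
      using F0(1) unfolding P_def by (intro span_mono) auto
    ultimately have f0in: "f0 \<in> span (insert w (F - {f0}))" by blast
    define F1 where "F1 = F - {f0}"
    have sp1: "span F = span (insert w F1)"
      unfolding span_eq F1_def
    proof
      show "F \<subseteq> span (insert w (F - {f0}))"
        using f0in by (auto intro: span_base)
      show "insert w (F - {f0}) \<subseteq> span F" using w by (auto intro: span_base)
    qed
    have f0F: "f0 \<in> F" using F0(1) f0 unfolding P_def by auto
    have cF1: "card F1 < card F" unfolding F1_def by (rule card_Diff1_less[OF less.prems f0F])
    define g where "g x = x - sc (B x w / B w w) w" for x
    define G where "G = g ` F1"
    have finG: "finite G" unfolding G_def F1_def using less.prems by auto
    have cG: "card G < card F" unfolding G_def using cF1 card_image_le[of F1 g] less.prems
      unfolding F1_def by auto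
    have exQ: "\<exists>Q. finite Q \<and> span Q = span G \<and> (\<forall>p\<in>Q. \<forall>q\<in>Q. p \<noteq> q \<longrightarrow> B p q = 0)"
      by (rule less.hyps[OF cG finG])
    then obtain Q1 where Q1: "finite Q1" "span Q1 = span G" "\<forall>p\<in>Q1. \<forall>q\<in>Q1. p \<noteq> q \<longrightarrow> B p q = 0"
      by (elim exE conjE)
    have wg: "\<forall>s\<in>{w}. \<forall>t\<in>G. B s t = 0"
    proof (intro ballI)
      fix s t assume s: "s \<in> {w}" and t: "t \<in> G"
      then obtain f where f: "t = g f" unfolding G_def by blast
      have "B w (g f) = B w f - (B f w / B w w) * B w w" unfolding g_def by (simp add: B_diffR B_scR)
      also have "\<dots> = 0" using w(2) B_sym[of f w] by simp
      finally show "B s t = 0" using s f by simp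
    qed
    have wG: "B w y = 0" if "y \<in> span G" for y
      by (rule orth_span[OF wg span_base that]) simp
    have spG: "span (insert w G) = span (insert w F1)"
      unfolding span_eq
    proof
      show "insert w G \<subseteq> span (insert w F1)"
      proof
        fix x assume "x \<in> insert w G"
        then show "x \<in> span (insert w F1)"
        proof
          assume "x = w" then show ?thesis by (simp add: span_base)
        next
          assume "x \<in> G" then obtain f where f: "f \<in> F1" "x = g f" unfolding G_def by blast
          have "f \<in> span (insert w F1)" "w \<in> span (insert w F1)" using f by (auto intro: span_base)
          then show ?thesis unfolding f g_def by (intro span_diff span_scale)
        qed
      qed
      show "insert w F1 \<subseteq> span (insert w G)"
      proof
        fix x assume "x \<in> insert w F1"
        then show "x \<in> span (insert w G)"
        proof
          assume "x = w" then show ?thesis by (auto intro: span_base)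
        next
          assume x: "x \<in> F1"
          have e: "x = g x + sc (B x w / B w w) w" unfolding g_def by simp
          have "g x \<in> span (insert w G)" using x unfolding G_def by (intro span_base) simp
          moreover have "sc (B x w / B w w) w \<in> span (insert w G)" by (intro span_scale span_base) simp
          ultimately have "g x + sc (B x w / B w w) w \<in> span (insert w G)" by (rule span_add)
          then show ?thesis using e by simp
        qed
      qed
    qed
    show ?thesis
    proof (intro exI conjI)
      show "finite (insert w Q1)" using Q1 by auto
      show "span (insert w Q1) = span F" using sp1 spG span_insert_eq[OF Q1(2), of w] by simp
      show "\<forall>p\<in>insert w Q1. \<forall>q\<in>insert w Q1. p \<noteq> q \<longrightarrow> B p q = 0"
      proof (intro ballI impI)
        fix p q assume oo: "p \<in> insert w Q1" "q \<in> insert w Q1" "p \<noteq> q"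
        have wy: "B w y = 0" if "y \<in> Q1" for y
          using wG[of y] Q1(2) span_base[OF that] by simp
        show "B p q = 0"
        proof (cases "p = w")
          case True
          then have "q \<in> Q1" using oo by auto
          then show ?thesis using wy True by simp
        next
          case False
          then have p: "p \<in> Q1" using oo by auto
          show ?thesis
          proof (cases "q = w")
            case True
            then show ?thesis using wy[OF p] B_sym[of p w] by simp
          next
            case False
            then have "q \<in> Q1" using oo by auto
            then show ?thesis using Q1(3) p oo(3) by blast
          qed
        qed
      qed
    qed
  qed
qed

lemma riesz:
  fixes \<phi> :: "'a \<Rightarrow> complex"
  assumes fin: "finite G"
    and nd: "\<forall>w\<in>span G. (\<forall>w'\<in>span G. B w w' = 0) \<longrightarrow> w = 0"
    and add: "\<forall>x\<in>span G. \<forall>y\<in>span G. \<phi> (x + y) = \<phi> x + \<phi> y"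
    and scl: "\<forall>c. \<forall>x\<in>span G. \<phi> (sc c x) = c * \<phi> x"
  shows "\<exists>u\<in>span G. \<forall>w\<in>span G. \<phi> w = B w u"
proof -
  obtain Q where Q: "finite Q" "span Q = span G" "\<forall>p\<in>Q. \<forall>q\<in>Q. p \<noteq> q \<longrightarrow> B p q = 0"
    using orth_basis[OF fin] by (elim exE conjE)
  have "\<phi> (0 + 0) = \<phi> 0 + \<phi> 0" using add span_zero[of G] by blast
  then have phi0: "\<phi> 0 = 0" by simp
  define Q1 where "Q1 = {p\<in>Q. B p p \<noteq> 0}"
  have finO': "finite Q1" using Q(1) unfolding Q1_def by auto
  define u where "u = (\<Sum>p\<in>Q1. sc (\<phi> p / B p p) p)"
  have uin: "u \<in> span G" unfolding u_def Q(2)[symmetric] Q1_def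
    by (intro span_sum span_scale span_base) auto
  have onO: "\<phi> p1 = B p1 u" if p1: "p1 \<in> Q" for p1
  proof (cases "p1 \<in> Q1")
    case True
    have "B p1 u = (\<Sum>p\<in>Q1. (\<phi> p / B p p) * B p1 p)" unfolding u_def by (simp add: B_sumR B_scR)
    also have "\<dots> = (\<phi> p1 / B p1 p1) * B p1 p1 + (\<Sum>p\<in>Q1 - {p1}. (\<phi> p / B p p) * B p1 p)"
      using True finO' by (simp add: sum.remove)
    also have "(\<Sum>p\<in>Q1 - {p1}. (\<phi> p / B p p) * B p1 p) = 0"
      using Q(3) p1 unfolding Q1_def by (intro sum.neutral) auto
    finally show ?thesis using True unfolding Q1_def by simp
  next
    case False
    then have z: "B p1 p1 = 0" using p1 unfolding Q1_def by auto
    have ortho: "\<forall>s\<in>{p1}. \<forall>t\<in>Q. B s t = 0" using Q(3) p1 z by auto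
    have "\<forall>w'\<in>span G. B p1 w' = 0" using orth_span[OF ortho] Q(2) by (auto intro: span_base)
    then have "p1 = 0" using nd p1 Q(2) span_base[of p1 Q] by auto
    moreover have "B p1 u = 0" using z by (simp add: \<open>p1 = 0\<close>)
    ultimately show ?thesis using phi0 by simp
  qed
  have "\<forall>w\<in>span G. \<phi> w = B w u"
  proof
    fix w assume "w \<in> span G"
    then have "w \<in> span Q" using Q(2) by simp
    moreover have "subspace {w. w \<in> span G \<and> \<phi> w = B w u}" unfolding subspace_def
      using add scl phi0 by (auto simp: B_addL B_scL span_zero span_add span_scale)
    ultimately have "w \<in> span G \<and> \<phi> w = B w u"
      by (rule span_ind) (use onO Q(2) span_base in auto)
    then show "\<phi> w = B w u" by simp
  qed
  then show ?thesis using uin by blast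
qed

lemma fin_span_subspace:
  assumes "subspace S" "S \<subseteq> H" shows "\<exists>G. finite G \<and> G \<subseteq> S \<and> span G = S"
proof -
  obtain F where F: "finite F" "F \<subseteq> H" "span F = H" using H_fin by blast
  obtain Bs where Bs: "Bs \<subseteq> S" "independent Bs" "S \<subseteq> span Bs" "card Bs = dim S" using basis_exists by blast
  have "finite Bs" using independent_span_bound[OF F(1) Bs(2)] Bs(1) assms(2) F(3) by auto
  moreover have "span Bs = S" using Bs assms(1) by (simp add: span_subspace)
  ultimately show ?thesis using Bs(1) by blast
qed

end

context ectx begin

abbreviation tv where "tv \<alpha> \<equiv> tvec B H \<alpha>"

lemma HdualD: "\<alpha> \<in> Hdual sc H \<Longrightarrow> x \<in> H \<Longrightarrow> y \<in> H \<Longrightarrow> \<alpha> (x + y) = \<alpha> x + \<alpha> y"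
  "\<alpha> \<in> Hdual sc H \<Longrightarrow> x \<in> H \<Longrightarrow> \<alpha> (sc c x) = c * \<alpha> x"
  "\<alpha> \<in> Hdual sc H \<Longrightarrow> x \<notin> H \<Longrightarrow> \<alpha> x = 0"
  unfolding Hdual_def by blast+

lemma Hdual_comb: "\<alpha> \<in> Hdual sc H \<Longrightarrow> \<beta> \<in> Hdual sc H \<Longrightarrow> (\<lambda>x. a * \<alpha> x + b * \<beta> x) \<in> Hdual sc H"
  unfolding Hdual_def by (auto simp: algebra_simps)

lemma Hdual_sum: "finite F \<Longrightarrow> (\<And>i. i \<in> F \<Longrightarrow> f i \<in> Hdual sc H) \<Longrightarrow> (\<lambda>x. \<Sum>i\<in>F. c i * f i x) \<in> Hdual sc H"
proof (induction F rule: finite_induct)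
  case empty then show ?case using Hdual_zero by simp
next
  case (insert i F)
  have "(\<lambda>x. 1 * (\<Sum>i\<in>F. c i * f i x) + c i * f i x) \<in> Hdual sc H"
    by (rule Hdual_comb) (use insert in auto)
  then show ?case using insert by (simp add: add.commute)
qed

lemma tvec_ex: assumes "\<alpha> \<in> Hdual sc H" shows "\<exists>t\<in>H. \<forall>h\<in>H. \<alpha> h = B h t"
proof -
  obtain F where F: "finite F" "F \<subseteq> H" "span F = H" using H_fin by blast
  have "\<exists>u\<in>span F. \<forall>w\<in>span F. \<alpha> w = B w u"
  proof (rule riesz[OF F(1)])
    show "\<forall>w\<in>span F. (\<forall>w'\<in>span F. B w w' = 0) \<longrightarrow> w = 0"
      using H_nd B_sym F(3) by metis
    show "\<forall>x\<in>span F. \<forall>y\<in>span F. \<alpha> (x + y) = \<alpha> x + \<alpha> y" using HdualD(1)[OF assms] F(3) by simp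
    show "\<forall>c. \<forall>x\<in>span F. \<alpha> (sc c x) = c * \<alpha> x" using HdualD(2)[OF assms] F(3) by simp
  qed
  then show ?thesis using F(3) by simp
qed

lemma tvec_uniq: assumes "t \<in> H" "t' \<in> H" "\<forall>h\<in>H. B h t = B h t'" shows "t = t'"
proof -
  have "t - t' = 0"
    by (rule H_nd) (use assms subspace_diff[OF H_sub] in \<open>auto simp: B_diffR\<close>)
  then show ?thesis by simp
qed

lemma tvec: assumes "\<alpha> \<in> Hdual sc H" shows "tv \<alpha> \<in> H" "\<forall>h\<in>H. \<alpha> h = B h (tv \<alpha>)"
proof -
  have ex1: "\<exists>!t. t \<in> H \<and> (\<forall>h\<in>H. \<alpha> h = B h t)"
    using tvec_ex[OF assms] tvec_uniq by metis
  have "tv \<alpha> \<in> H \<and> (\<forall>h\<in>H. \<alpha> h = B h (tv \<alpha>))"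
    unfolding tvec_def by (rule theI'[OF ex1])
  then show "tv \<alpha> \<in> H" "\<forall>h\<in>H. \<alpha> h = B h (tv \<alpha>)" by auto
qed

lemma tvec_eq: assumes "\<alpha> \<in> Hdual sc H" "t \<in> H" "\<forall>h\<in>H. \<alpha> h = B h t" shows "tv \<alpha> = t"
  using tvec[OF assms(1)] assms tvec_uniq by metis

lemma tvD: "\<alpha> \<in> Hdual sc H \<Longrightarrow> h \<in> H \<Longrightarrow> \<alpha> h = B h (tv \<alpha>)"
  using tvec(2) by blast

lemma dform_eq: "\<alpha> \<in> Hdual sc H \<Longrightarrow> \<beta> \<in> Hdual sc H \<Longrightarrow> dform B H \<alpha> \<beta> = \<beta> (tv \<alpha>)"
  unfolding dform_def using tvD tvec(1) by metis

lemma tv_zero: "tv (\<lambda>_. 0) = 0"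
  by (rule tvec_eq[OF Hdual_zero subspace_0[OF H_sub]]) simp

lemma roots_Hdual: "\<alpha> \<in> roots sc br H \<Longrightarrow> \<alpha> \<in> Hdual sc H" unfolding roots_def by blast

lemma root_nz: assumes "\<alpha> \<in> roots sc br H" obtains x where "x \<in> rootsp sc br H \<alpha>" "x \<noteq> 0"
proof -
  have "rootsp sc br H \<alpha> \<noteq> {0}" using assms unfolding roots_def by blast
  moreover have "0 \<in> rootsp sc br H \<alpha>" using subspace_0[OF rootsp_sub] .
  ultimately show ?thesis using that by blast
qed

lemma rootI: "\<alpha> \<in> Hdual sc H \<Longrightarrow> x \<in> rootsp sc br H \<alpha> \<Longrightarrow> x \<noteq> 0 \<Longrightarrow> \<alpha> \<in> roots sc br H"
  unfolding roots_def by blast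

lemma sum_nz: assumes "sum f S \<noteq> (0::complex)" shows "\<exists>i\<in>S. f i \<noteq> 0"
proof (rule ccontr)
  assume "\<not> (\<exists>i\<in>S. f i \<noteq> 0)"
  then have "\<forall>i\<in>S. f i = 0" by simp
  then have "sum f S = 0" by (rule sum.neutral)
  then show False using assms by simp
qed

lemma pairing:
  assumes a: "\<alpha> \<in> Hdual sc H" and x: "x \<in> rootsp sc br H \<alpha>" and nz: "x \<noteq> 0"
  shows "\<exists>y\<in>rootsp sc br H (\<lambda>z. - \<alpha> z). B x y \<noteq> 0"
proof -
  obtain z where z: "B x z \<noteq> 0" using B_nd nz by blast
  obtain S f where S: "finite S" "S \<subseteq> Hdual sc H" "\<forall>\<alpha>\<in>S. f \<alpha> \<in> rootsp sc br H \<alpha>" "z = (\<Sum>\<alpha>\<in>S. f \<alpha>)"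
    using decomp[of z] by blast
  have "(\<Sum>\<beta>\<in>S. B x (f \<beta>)) \<noteq> 0" using z S(4) by (simp add: B_sumR)
  then obtain \<beta> where b: "\<beta> \<in> S" "B x (f \<beta>) \<noteq> 0" using sum_nz by blast
  have "(\<lambda>z. \<alpha> z + \<beta> z) = (\<lambda>_. 0)"
  proof (rule ccontr)
    assume "(\<lambda>z. \<alpha> z + \<beta> z) \<noteq> (\<lambda>_. 0)"
    then have "B x (f \<beta>) = 0"
      using B_root_orth[OF a _ x] S(2,3) b(1) by blast
    then show False using b by simp
  qed
  then have "\<beta> = (\<lambda>z. - \<alpha> z)" by (metis add_eq_0_iff)
  then show ?thesis using S(3) b by auto
qed

lemma neg_Hdual: "\<alpha> \<in> Hdual sc H \<Longrightarrow> (\<lambda>z. - \<alpha> z) \<in> Hdual sc H"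
  using Hdual_comb[of \<alpha> \<alpha> "-1" 0] by simp

lemma neg_root: assumes "\<alpha> \<in> roots sc br H" shows "(\<lambda>z. - \<alpha> z) \<in> roots sc br H"
proof -
  obtain x where x: "x \<in> rootsp sc br H \<alpha>" "x \<noteq> 0" using root_nz[OF assms] by blast
  obtain y where y: "y \<in> rootsp sc br H (\<lambda>z. - \<alpha> z)" "B x y \<noteq> 0"
    using pairing[OF roots_Hdual[OF assms] x] by blast
  have "y \<noteq> 0" using y by auto
  then show ?thesis using y rootI neg_Hdual roots_Hdual[OF assms] by blast
qed

lemma br_pair:
  assumes a: "\<alpha> \<in> Hdual sc H" and x: "x \<in> rootsp sc br H \<alpha>" and y: "y \<in> rootsp sc br H (\<lambda>z. - \<alpha> z)"
  shows "br x y = sc (B x y) (tv \<alpha>)"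
proof -
  have "br x y \<in> rootsp sc br H (\<lambda>z. \<alpha> z + - \<alpha> z)" by (rule rootsp_br[OF x y])
  then have xyH: "br x y \<in> H" using rootsp0 by simp
  have tH: "tv \<alpha> \<in> H" using tvec(1)[OF a] .
  have "br x y - sc (B x y) (tv \<alpha>) = 0"
  proof (rule H_nd)
    show "br x y - sc (B x y) (tv \<alpha>) \<in> H"
      using xyH tH H_sub by (simp add: subspace_diff subspace_scale)
    show "\<forall>h\<in>H. B h (br x y - sc (B x y) (tv \<alpha>)) = 0"
    proof
      fix h assume h: "h \<in> H"
      have "B h (br x y) = B (br h x) y" by (simp add: B_inv)
      also have "\<dots> = \<alpha> h * B x y" using rootspD[OF x h] by (simp add: B_scL)
      finally show "B h (br x y - sc (B x y) (tv \<alpha>)) = 0"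
        using tvD[OF a h] by (simp add: B_diffR B_scR)
    qed
  qed
  then show ?thesis by simp
qed

lemma iter_root: "x \<in> rootsp sc br H a \<Longrightarrow> w \<in> rootsp sc br H \<mu> \<Longrightarrow>
   (br x ^^ k) w \<in> rootsp sc br H (\<lambda>z. \<mu> z + of_nat k * a z)"
proof (induction k)
  case 0 then show ?case by simp
next
  case (Suc k)
  have "br x ((br x ^^ k) w) \<in> rootsp sc br H (\<lambda>z. a z + (\<mu> z + of_nat k * a z))"
    by (rule rootsp_br[OF Suc.prems(1) Suc.IH[OF Suc.prems]])
  moreover have "(\<lambda>z. a z + (\<mu> z + of_nat k * a z)) = (\<lambda>z. \<mu> z + of_nat (Suc k) * a z)"
    by (simp add: algebra_simps)
  ultimately show ?case by simp
qed

end

context ectx begin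

lemma nonzero_sc: "sc c x = 0 \<Longrightarrow> x \<noteq> 0 \<Longrightarrow> c = 0"
  using scale_eq_0_iff by blast

lemma least_nz:
  assumes "P (k::nat)" "\<not> P 0"
  obtains j where "\<not> P j" "P (Suc j)"
proof -
  define J where "J = (LEAST n. P n)"
  have PJ: "P J" unfolding J_def by (rule LeastI[of P k, OF assms(1)])
  have "J \<noteq> 0"
  proof
    assume "J = 0" with PJ assms(2) show False by simp
  qed
  then obtain j where j: "J = Suc j" by (cases J) auto
  have "\<not> P j" using not_less_Least[of j P] j unfolding J_def by simp
  then show ?thesis using that PJ j by simp
qed

lemma nonisoD: "\<beta> \<in> nonisotropic_roots sc br B H \<Longrightarrow> \<beta> \<in> roots sc br H \<and> dform B H \<beta> \<beta> \<noteq> 0"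
  unfolding nonisotropic_roots_def by blast

lemma tv_neg: assumes a: "\<alpha> \<in> Hdual sc H" shows "tv (\<lambda>z. - \<alpha> z) = - tv \<alpha>"
proof (rule tvec_eq[OF neg_Hdual[OF a]])
  show "- tv \<alpha> \<in> H" using subspace_neg[OF H_sub tvec(1)[OF a]] .
  show "\<forall>h\<in>H. - \<alpha> h = B h (- tv \<alpha>)" using tvD[OF a] by (simp add: B_negR)
qed

lemma sl2_int:
  assumes bR: "\<beta> \<in> nonisotropic_roots sc br B H" and gR: "\<gamma> \<in> roots sc br H"
  shows "2 * \<gamma> (tv \<beta>) / \<beta> (tv \<beta>) \<in> \<int>"
proof -
  have bR': "\<beta> \<in> roots sc br H" and bd: "dform B H \<beta> \<beta> \<noteq> 0" using nonisoD[OF bR] by auto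
  have bH: "\<beta> \<in> Hdual sc H" using roots_Hdual[OF bR'] .
  have gH: "\<gamma> \<in> Hdual sc H" using roots_Hdual[OF gR] .
  define b where "b = \<beta> (tv \<beta>)"
  have b0: "b \<noteq> 0" using bd dform_eq[OF bH bH] unfolding b_def by simp
  have tbH: "tv \<beta> \<in> H" using tvec(1)[OF bH] .
  obtain e where e: "e \<in> rootsp sc br H \<beta>" "e \<noteq> 0" using root_nz[OF bR'] by blast
  obtain y where y: "y \<in> rootsp sc br H (\<lambda>z. - \<beta> z)" "B e y \<noteq> 0" using pairing[OF bH e] by blast
  define f where "f = sc (1 / B e y) y"
  have f: "f \<in> rootsp sc br H (\<lambda>z. - \<beta> z)" unfolding f_def using y(1) subspace_scale[OF rootsp_sub] by blast
  have Bef: "B e f = 1" unfolding f_def using y(2) by (simp add: B_scR)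
  have ef: "br e f = tv \<beta>" using br_pair[OF bH e(1) f] Bef by simp
  have fnz: "f \<noteq> 0" using Bef by auto
  have mbR: "(\<lambda>z. - \<beta> z) \<in> nonisotropic_roots sc br B H"
  proof -
    have r: "(\<lambda>z. - \<beta> z) \<in> roots sc br H" using neg_root[OF bR'] .
    have "dform B H (\<lambda>z. - \<beta> z) (\<lambda>z. - \<beta> z) = dform B H \<beta> \<beta>"
      unfolding dform_def tv_neg[OF bH] by (simp add: B_negL B_negR)
    then show ?thesis using r bd unfolding nonisotropic_roots_def by simp
  qed
  obtain u where u: "u \<in> rootsp sc br H \<gamma>" "u \<noteq> 0" using root_nz[OF gR] by blast
  obtain n where n: "(br e ^^ n) u = 0" using EA3[OF bR e(1)] by blast
  obtain p where p: "(br e ^^ p) u \<noteq> 0" "(br e ^^ Suc p) u = 0"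
    using least_nz[of "\<lambda>k. (br e ^^ k) u = 0" n] n u(2) by auto
  define v where "v = (br e ^^ p) u"
  have vnz: "v \<noteq> 0" and ev: "br e v = 0" using p unfolding v_def by auto
  define \<mu> where "\<mu> = (\<lambda>z. \<gamma> z + of_nat p * \<beta> z)"
  have v: "v \<in> rootsp sc br H \<mu>" unfolding v_def \<mu>_def by (rule iter_root[OF e(1) u(1)])
  define lam where "lam = \<mu> (tv \<beta>)"
  define w where "w j = (br f ^^ j) v" for j
  have wr: "w j \<in> rootsp sc br H (\<lambda>z. \<mu> z + of_nat j * - \<beta> z)" for j
    unfolding w_def by (rule iter_root[OF f v])
  have hw: "br (tv \<beta>) (w j) = sc (lam - of_nat j * b) (w j)" for j
    using rootspD[OF wr[of j] tbH] unfolding lam_def b_def by (simp add: algebra_simps)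
  have wS: "w (Suc j) = br f (w j)" for j unfolding w_def by simp
  have key: "br e (w (Suc j)) = sc (of_nat (Suc j) * (lam - of_nat j * b / 2)) (w j)" for j
  proof (induction j)
    case 0
    have "br e (w (Suc 0)) = br e (br f v)" by (simp add: w_def)
    also have "\<dots> = br (br e f) v + br f (br e v)" by (rule br_deriv)
    also have "\<dots> = sc lam v" using hw[of 0] ev unfolding ef by (simp add: w_def)
    finally show ?case by (simp add: w_def)
  next
    case (Suc j)
    have "br e (w (Suc (Suc j))) = br (br e f) (w (Suc j)) + br f (br e (w (Suc j)))"
      unfolding wS[of "Suc j"] by (rule br_deriv)
    also have "\<dots> = sc (lam - of_nat (Suc j) * b) (w (Suc j))
        + sc (of_nat (Suc j) * (lam - of_nat j * b / 2)) (w (Suc j))"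
      unfolding ef hw Suc br_scR wS[symmetric] ..
    also have "\<dots> = sc ((lam - of_nat (Suc j) * b) + of_nat (Suc j) * (lam - of_nat j * b / 2)) (w (Suc j))"
      by (simp only: scale_left_distrib)
    also have "(lam - of_nat (Suc j) * b) + of_nat (Suc j) * (lam - of_nat j * b / 2)
        = of_nat (Suc (Suc j)) * (lam - of_nat (Suc j) * b / 2)"
      by (simp add: of_nat_Suc field_simps)
    finally show ?case .
  qed
  obtain m where m: "(br f ^^ m) v = 0" using EA3[OF mbR f] by blast
  obtain j where j: "w j \<noteq> 0" "w (Suc j) = 0"
    using least_nz[of "\<lambda>k. w k = 0" m] m vnz unfolding w_def by auto
  have "sc (of_nat (Suc j) * (lam - of_nat j * b / 2)) (w j) = 0" using key[of j] j(2) by simp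
  then have "of_nat (Suc j) * (lam - of_nat j * b / 2) = 0" using nonzero_sc j(1) by blast
  then have "lam - of_nat j * b / 2 = 0" by (metis mult_eq_0_iff of_nat_eq_0_iff nat.simps(3))
  then have "lam = of_nat j * b / 2" by simp
  moreover have "lam = \<gamma> (tv \<beta>) + of_nat p * b" unfolding lam_def \<mu>_def b_def by simp
  ultimately have "2 * \<gamma> (tv \<beta>) / b = of_int (int j - 2 * int p)"
    using b0 by (simp add: field_simps)
  then show ?thesis unfolding b_def by (metis Ints_of_int)
qed

end

context ectx begin

lemma inf_int_unbounded: assumes "infinite (N :: int set)" shows "\<exists>n\<in>N. M < \<bar>n\<bar>"
proof (rule ccontr)
  assume "\<not> (\<exists>n\<in>N. M < \<bar>n\<bar>)"
  have "N \<subseteq> {-M..M}"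
  proof
    fix x assume "x \<in> N"
    then have "\<bar>x\<bar> \<le> M" using \<open>\<not> (\<exists>n\<in>N. M < \<bar>n\<bar>)\<close> by (meson not_less)
    then show "x \<in> {-M..M}" by (simp add: abs_le_iff)
  qed
  then have "finite N" using finite_subset by blast
  then show False using assms by simp
qed

lemma isoD: "\<sigma> \<in> isotropic_roots sc br B H \<Longrightarrow> \<sigma> \<in> roots sc br H \<and> dform B H \<sigma> \<sigma> = 0"
  unfolding isotropic_roots_def nonisotropic_roots_def by blast

lemma factA:
  assumes sR: "\<sigma> \<in> isotropic_roots sc br B H" and aR: "\<alpha> \<in> roots sc br H"
  shows "\<alpha> (tv \<sigma>) = 0"
proof (rule ccontr)
  have sR': "\<sigma> \<in> roots sc br H" and sd: "dform B H \<sigma> \<sigma> = 0" using isoD[OF sR] by auto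
  have sH: "\<sigma> \<in> Hdual sc H" using roots_Hdual[OF sR'] .
  have aH: "\<alpha> \<in> Hdual sc H" using roots_Hdual[OF aR] .
  have tsH: "tv \<sigma> \<in> H" using tvec(1)[OF sH] .
  have taH: "tv \<alpha> \<in> H" using tvec(1)[OF aH] .
  have ss: "\<sigma> (tv \<sigma>) = 0" using sd dform_eq[OF sH sH] by simp
  define s where "s = \<alpha> (tv \<sigma>)"
  assume "\<alpha> (tv \<sigma>) \<noteq> 0"
  then have s0: "s \<noteq> 0" unfolding s_def .
  obtain x where x: "x \<in> rootsp sc br H \<sigma>" "x \<noteq> 0" using root_nz[OF sR'] by blast
  obtain y' where y': "y' \<in> rootsp sc br H (\<lambda>z. - \<sigma> z)" "B x y' \<noteq> 0" using pairing[OF sH x] by blast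
  define y where "y = sc (1 / B x y') y'"
  have y: "y \<in> rootsp sc br H (\<lambda>z. - \<sigma> z)" unfolding y_def using y'(1) subspace_scale[OF rootsp_sub] by blast
  have Bxy: "B x y = 1" unfolding y_def using y'(2) by (simp add: B_scR)
  have xy: "br x y = tv \<sigma>" using br_pair[OF sH x(1) y] Bxy by simp
  define bt where "bt n = (\<lambda>z. \<alpha> z + of_int n * \<sigma> z)" for n :: int
  have btH: "bt n \<in> Hdual sc H" for n unfolding bt_def using Hdual_comb[OF aH sH, of 1 "of_int n"] by simp
  define N where "N = {n. rootsp sc br H (bt n) \<noteq> {0}}"
  have btR: "bt n \<in> roots sc br H" if "n \<in> N" for n using that btH unfolding N_def roots_def by blast
  have notN: "z = 0" if "n \<notin> N" "z \<in> rootsp sc br H (bt n)" for n z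
    using that unfolding N_def by auto
  have bt0: "bt 0 = \<alpha>" unfolding bt_def by simp
  have "0 \<in> N" using aR bt0 unfolding N_def roots_def by simp
  have infN: "infinite N"
  proof
    assume fin: "finite N"
    define n1 where "n1 = Max N"
    define n0 where "n0 = Min N"
    have n1N: "n1 \<in> N" unfolding n1_def using fin \<open>0 \<in> N\<close> by (intro Max_in) auto
    have n0N: "n0 \<in> N" unfolding n0_def using fin \<open>0 \<in> N\<close> by (intro Min_in) auto
    have n01: "n0 \<le> n1" unfolding n0_def using Min_le[OF fin n1N] .
    have "rootsp sc br H (bt n1) \<noteq> {0}" using n1N unfolding N_def by simp
    moreover have "0 \<in> rootsp sc br H (bt n1)" using subspace_0[OF rootsp_sub] .
    ultimately obtain v where v: "v \<in> rootsp sc br H (bt n1)" "v \<noteq> 0" by blast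
    define w where "w j = (br y ^^ j) v" for j
    have wr: "w j \<in> rootsp sc br H (bt (n1 - int j))" for j
    proof -
      have "w j \<in> rootsp sc br H (\<lambda>z. bt n1 z + of_nat j * - \<sigma> z)" unfolding w_def by (rule iter_root[OF y v(1)])
      moreover have "(\<lambda>z. bt n1 z + of_nat j * - \<sigma> z) = bt (n1 - int j)"
        unfolding bt_def by (simp add: algebra_simps)
      ultimately show ?thesis by simp
    qed
    have bxv: "br x v = 0"
    proof (rule notN)
      show "n1 + 1 \<notin> N" using fin n1_def Max_ge by fastforce
      have "br x v \<in> rootsp sc br H (\<lambda>z. \<sigma> z + bt n1 z)" by (rule rootsp_br[OF x(1) v(1)])
      moreover have "(\<lambda>z. \<sigma> z + bt n1 z) = bt (n1 + 1)" unfolding bt_def by (simp add: algebra_simps)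
      ultimately show "br x v \<in> rootsp sc br H (bt (n1 + 1))" by simp
    qed
    have hs: "br (tv \<sigma>) (w j) = sc s (w j)" for j
      using rootspD[OF wr[of j] tsH] unfolding bt_def s_def by (simp add: ss)
    have wS: "w (Suc j) = br y (w j)" for j unfolding w_def by simp
    have key: "br x (w (Suc j)) = sc (of_nat (Suc j) * s) (w j)" for j
    proof (induction j)
      case 0
      have "br x (w (Suc 0)) = br x (br y v)" by (simp add: w_def)
      also have "\<dots> = br (br x y) v + br y (br x v)" by (rule br_deriv)
      also have "\<dots> = sc s v" using hs[of 0] bxv unfolding xy by (simp add: w_def)
      finally show ?case by (simp add: w_def)
    next
      case (Suc j)
      have "br x (w (Suc (Suc j))) = br (br x y) (w (Suc j)) + br y (br x (w (Suc j)))"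
        unfolding wS[of "Suc j"] by (rule br_deriv)
      also have "\<dots> = sc s (w (Suc j)) + sc (of_nat (Suc j) * s) (w (Suc j))"
        unfolding xy hs Suc br_scR wS[symmetric] ..
      also have "\<dots> = sc (s + of_nat (Suc j) * s) (w (Suc j))"
        by (simp only: scale_left_distrib)
      also have "s + of_nat (Suc j) * s = of_nat (Suc (Suc j)) * s"
        by (simp add: of_nat_Suc algebra_simps)
      finally show ?case .
    qed
    define K where "K = Suc (nat (n1 - n0))"
    have wK: "w K = 0"
    proof (rule notN)
      show "n1 - int K \<notin> N"
      proof
        assume "n1 - int K \<in> N"
        then have "n0 \<le> n1 - int K" unfolding n0_def using fin by (simp add: Min_le)
        then show False unfolding K_def using n01 by simp
      qed
      show "w K \<in> rootsp sc br H (bt (n1 - int K))" by (rule wr)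
    qed
    have w0: "w 0 \<noteq> 0" using v(2) by (simp add: w_def)
    obtain j where j: "w j \<noteq> 0" "w (Suc j) = 0"
      using least_nz[of "\<lambda>k. w k = 0" K] wK w0 by auto
    have "sc (of_nat (Suc j) * s) (w j) = 0" using key[of j] j(2) by simp
    then have "of_nat (Suc j) * s = 0" using nonzero_sc j(1) by blast
    then have "s = 0" by (metis mult_eq_0_iff of_nat_eq_0_iff nat.simps(3))
    then show False using s0 by simp
  qed
  define a where "a = \<alpha> (tv \<alpha>)"
  define M where "M = ceiling ((cmod a + 2 * cmod s) / (2 * cmod s))"
  obtain n where nN: "n \<in> N" and nM: "M < \<bar>n\<bar>" using inf_int_unbounded[OF infN] by blast
  define tb where "tb = tv \<alpha> + sc (of_int n) (tv \<sigma>)"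
  have tbH: "tb \<in> H" unfolding tb_def using taH tsH H_sub by (simp add: subspace_add subspace_scale)
  have tvb: "tv (bt n) = tb"
  proof (rule tvec_eq[OF btH tbH])
    show "\<forall>h\<in>H. bt n h = B h tb"
      using tvD[OF aH] tvD[OF sH] unfolding bt_def tb_def by (simp add: B_addR B_scR)
  qed
  have Baa: "B (tv \<alpha>) (tv \<alpha>) = a" unfolding a_def using tvD[OF aH taH] by simp
  have Bsa: "B (tv \<sigma>) (tv \<alpha>) = s" unfolding s_def using tvD[OF aH tsH] by simp
  have Bas: "B (tv \<alpha>) (tv \<sigma>) = s" using Bsa B_sym by metis
  have Bss: "B (tv \<sigma>) (tv \<sigma>) = 0" using ss tvD[OF sH tsH] by simp
  have D: "bt n tb = a + 2 * of_int n * s"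
  proof -
    have "bt n tb = B tb tb" using tvD[OF btH tbH] tvb by simp
    also have "\<dots> = a + 2 * of_int n * s" unfolding tb_def
      by (simp add: B_addL B_addR B_scL B_scR Baa Bsa Bas Bss algebra_simps)
    finally show ?thesis .
  qed
  have stb: "\<sigma> tb = s"
  proof -
    have "\<sigma> tb = B tb (tv \<sigma>)" using tvD[OF sH tbH] .
    also have "\<dots> = s" unfolding tb_def by (simp add: B_addL B_scL Bas Bss)
    finally show ?thesis .
  qed
  have cs: "cmod s > 0" using s0 by simp
  have "real_of_int M \<ge> (cmod a + 2 * cmod s) / (2 * cmod s)" unfolding M_def by linarith
  moreover have "real_of_int \<bar>n\<bar> \<ge> real_of_int M + 1" using nM by linarith
  ultimately have "real_of_int \<bar>n\<bar> * (2 * cmod s) \<ge> ((cmod a + 2 * cmod s) / (2 * cmod s) + 1) * (2 * cmod s)"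
    using cs by (intro mult_right_mono) auto
  also have "((cmod a + 2 * cmod s) / (2 * cmod s) + 1) * (2 * cmod s) = cmod a + 4 * cmod s"
    using cs by (simp add: field_simps)
  finally have big: "real_of_int \<bar>n\<bar> * (2 * cmod s) \<ge> cmod a + 4 * cmod s" .
  have c2: "cmod (2 * of_int n * s) = real_of_int \<bar>n\<bar> * (2 * cmod s)"
    by (simp add: norm_mult)
  have "cmod (2 * of_int n * s) \<le> cmod (a + 2 * of_int n * s) + cmod a"
    using norm_triangle_ineq4[of "a + 2 * of_int n * s" a] by simp
  then have Dbig: "cmod (a + 2 * of_int n * s) \<ge> 4 * cmod s" using big c2 by linarith
  then have Dnz: "a + 2 * of_int n * s \<noteq> 0" using cs by auto
  have btx: "bt n \<in> nonisotropic_roots sc br B H"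
    unfolding nonisotropic_roots_def using btR[OF nN] dform_eq[OF btH btH] tvb D Dnz by simp
  have "2 * \<sigma> (tv (bt n)) / bt n (tv (bt n)) \<in> \<int>" by (rule sl2_int[OF btx sR'])
  then have kI: "2 * s / (a + 2 * of_int n * s) \<in> \<int>" using tvb D stb by simp
  then obtain m where m: "2 * s / (a + 2 * of_int n * s) = of_int m" by (elim Ints_cases)
  have "cmod (2 * s / (a + 2 * of_int n * s)) = 2 * cmod s / cmod (a + 2 * of_int n * s)"
    by (simp add: norm_divide)
  also have "\<dots> < 1"
  proof -
    have lt: "2 * cmod s < cmod (a + 2 * of_int n * s)" using Dbig cs by linarith
    then have "cmod (a + 2 * of_int n * s) > 0" using cs by linarith
    then show ?thesis using lt by (simp add: divide_less_eq)
  qed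
  finally have "\<bar>real_of_int m\<bar> < 1" using m by simp
  then have "m = 0" by linarith
  then have "2 * s = 0" using m Dnz by (simp add: divide_eq_0_iff)
  then show False using s0 by simp
qed

end

context ectx begin

lemma span_H: "S \<subseteq> H \<Longrightarrow> span S \<subseteq> H" using span_minimal[OF _ H_sub] .

lemma tv_img_H: "S \<subseteq> Hdual sc H \<Longrightarrow> span (tv ` S) \<subseteq> H"
  using tvec(1) span_H by blast

lemma ssum_sub: "subspace A \<Longrightarrow> subspace C \<Longrightarrow> subspace (ssum A C)"
  unfolding subspace_def ssum_def
proof (intro conjI allI impI ballI; elim conjE)
  assume A: "0 \<in> A" "\<forall>x\<in>A. \<forall>y\<in>A. x + y \<in> A" "\<forall>c. \<forall>x\<in>A. sc c x \<in> A"
    and C: "0 \<in> C" "\<forall>x\<in>C. \<forall>y\<in>C. x + y \<in> C" "\<forall>c. \<forall>x\<in>C. sc c x \<in> C"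
  show "0 \<in> {a + b |a b. a \<in> A \<and> b \<in> C}" using A C by force
  fix x y assume "x \<in> {a + b |a b. a \<in> A \<and> b \<in> C}" "y \<in> {a + b |a b. a \<in> A \<and> b \<in> C}"
  then obtain a b a' b' where "x = a + b" "y = a' + b'" "a \<in> A" "b \<in> C" "a' \<in> A" "b' \<in> C" by blast
  then show "x + y \<in> {a + b |a b. a \<in> A \<and> b \<in> C}" using A C
    by (intro CollectI exI[of _ "a + a'"] exI[of _ "b + b'"]) (simp add: algebra_simps)
next
  fix c x assume A: "0 \<in> A" "\<forall>x\<in>A. \<forall>y\<in>A. x + y \<in> A" "\<forall>c. \<forall>x\<in>A. sc c x \<in> A"
    and C: "0 \<in> C" "\<forall>x\<in>C. \<forall>y\<in>C. x + y \<in> C" "\<forall>c. \<forall>x\<in>C. sc c x \<in> C"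
    and "x \<in> {a + b |a b. a \<in> A \<and> b \<in> C}"
  then obtain a b where "x = a + b" "a \<in> A" "b \<in> C" by blast
  then show "sc c x \<in> {a + b |a b. a \<in> A \<and> b \<in> C}" using A C
    by (intro CollectI exI[of _ "sc c a"] exI[of _ "sc c b"]) (simp add: scale_right_distrib)
qed

lemma ssumI: "a \<in> A \<Longrightarrow> b \<in> C \<Longrightarrow> a + b \<in> ssum A C" unfolding ssum_def by blast
lemma ssumE: "x \<in> ssum A C \<Longrightarrow> (\<And>a b. a \<in> A \<Longrightarrow> b \<in> C \<Longrightarrow> x = a + b \<Longrightarrow> P) \<Longrightarrow> P"
  unfolding ssum_def by blast
lemma ssum_left: "a \<in> A \<Longrightarrow> 0 \<in> C \<Longrightarrow> a \<in> ssum A C" using ssumI[of a A 0 C] by simp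
lemma ssum_right: "b \<in> C \<Longrightarrow> 0 \<in> A \<Longrightarrow> b \<in> ssum A C" using ssumI[of 0 A b C] by simp

lemma tv_inj: "a \<in> Hdual sc H \<Longrightarrow> b \<in> Hdual sc H \<Longrightarrow> tv a = tv b \<Longrightarrow> a = b"
proof
  fix x assume a: "a \<in> Hdual sc H" and b: "b \<in> Hdual sc H" and e: "tv a = tv b"
  show "a x = b x"
  proof (cases "x \<in> H")
    case True then show ?thesis using tvD[OF a True] tvD[OF b True] e by simp
  next
    case False then show ?thesis using HdualD(3)[OF a False] HdualD(3)[OF b False] by simp
  qed
qed

lemma tv_sum:
  assumes F: "finite F" "F \<subseteq> Hdual sc H"
  shows "tv (\<lambda>x. \<Sum>i\<in>F. c i * i x) = (\<Sum>i\<in>F. sc (c i) (tv i))"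
proof (rule tvec_eq)
  show "(\<lambda>x. \<Sum>i\<in>F. c i * i x) \<in> Hdual sc H" using Hdual_sum[OF F(1), of "\<lambda>i. i" c] F(2) by auto
  show "(\<Sum>i\<in>F. sc (c i) (tv i)) \<in> H"
    using F tvec(1) H_sub by (intro subspace_sum[OF H_sub] subspace_scale[OF H_sub]) auto
  show "\<forall>h\<in>H. (\<Sum>i\<in>F. c i * i h) = B h (\<Sum>i\<in>F. sc (c i) (tv i))"
  proof
    fix h assume h: "h \<in> H"
    have "(\<Sum>i\<in>F. c i * i h) = (\<Sum>i\<in>F. c i * B h (tv i))"
      using F(2) tvD h by (intro sum.cong) auto
    then show "(\<Sum>i\<in>F. c i * i h) = B h (\<Sum>i\<in>F. sc (c i) (tv i))" by (simp add: B_sumR B_scR)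
  qed
qed

end

locale mctx = ectx sc br B H for sc :: "complex \<Rightarrow> 'a::ab_group_add \<Rightarrow> 'a" and br B H +
  fixes dotR :: "('a \<Rightarrow> complex) set" and Hhat0 :: "'a set"
  assumes dotR_sub: "dotR \<subseteq> roots sc br H"
    and dotR_rs: "finite_root_system B H dotR"
    and dotR_cover: "\<forall>\<alpha>\<in>roots sc br H. \<exists>a\<in>dotR. (\<lambda>x. \<alpha> x - a x) \<in> rspan (isotropic_roots sc br B H)"
    and Hhat0_sub: "subspace Hhat0"
    and Hhat0_orth: "Hhat0 \<subseteq> orth B H (span (tvec B H ` dotR))"
    and Hhat0_nondeg: "\<forall>x\<in>ssum (span (tvec B H ` isotropic_roots sc br B H)) Hhat0.
        (\<forall>y\<in>ssum (span (tvec B H ` isotropic_roots sc br B H)) Hhat0. B x y = 0) \<longrightarrow> x = 0"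
    and tame: "tame sc br B H"
begin

abbreviation "Rt \<equiv> roots sc br H"
abbreviation "Rx \<equiv> nonisotropic_roots sc br B H"
abbreviation "R0 \<equiv> isotropic_roots sc br B H"
abbreviation "dotH \<equiv> span (tv ` dotR)"
abbreviation "Hc \<equiv> span (tv ` Rx)"
abbreviation "H0 \<equiv> span (tv ` R0)"

lemma Rx_Rt: "Rx \<subseteq> Rt" unfolding nonisotropic_roots_def by blast
lemma R0_Rt: "R0 \<subseteq> Rt" unfolding isotropic_roots_def by blast
lemma Rt_Hd: "Rt \<subseteq> Hdual sc H" using roots_Hdual by blast
lemma dotR_Hd: "dotR \<subseteq> Hdual sc H" using dotR_sub Rt_Hd by blast
lemma dotR_fin: "finite dotR" using dotR_rs unfolding finite_root_system_def by (elim conjE) assumption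
lemma dotR_pos0: "\<forall>v\<in>rspan dotR. v \<noteq> (\<lambda>_. 0) \<longrightarrow> dform B H v v \<in> \<real> \<and> Re (dform B H v v) > 0"
  using dotR_rs unfolding finite_root_system_def by (elim conjE) assumption
lemma dotR_pos: "v \<in> rspan dotR \<Longrightarrow> v \<noteq> (\<lambda>_. 0) \<Longrightarrow> dform B H v v \<in> \<real> \<and> Re (dform B H v v) > 0"
  using dotR_pos0 by blast

lemma dotH_H: "dotH \<subseteq> H" using tv_img_H dotR_Hd by blast
lemma Hc_H: "Hc \<subseteq> H" using tv_img_H Rx_Rt Rt_Hd by blast
lemma H0_H: "H0 \<subseteq> H" using tv_img_H R0_Rt Rt_Hd by blast
lemma Hhat0_H: "Hhat0 \<subseteq> H" using Hhat0_orth unfolding orth_def by blast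

lemma rspan_single: assumes "a \<in> S" shows "a \<in> rspan S"
  unfolding rspan_def
  by (intro CollectI exI[of _ "{a}"] exI[of _ "\<lambda>_. 1::real"] conjI) (use assms in auto)

lemma dotR_Rx: assumes "a \<in> dotR" "a \<noteq> (\<lambda>_. 0)" shows "a \<in> Rx"
proof -
  have "Re (dform B H a a) > 0" using dotR_pos[OF rspan_single[OF assms(1)] assms(2)] by blast
  then have "dform B H a a \<noteq> 0" by auto
  then show ?thesis using dotR_sub assms(1) unfolding nonisotropic_roots_def by blast
qed

lemma dotH_Hc: "dotH \<subseteq> Hc"
proof (rule span_minimal[OF _ subspace_span])
  show "tv ` dotR \<subseteq> Hc"
  proof
    fix t assume "t \<in> tv ` dotR"
    then obtain a where a: "a \<in> dotR" "t = tv a" by blast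
    show "t \<in> Hc"
    proof (cases "a = (\<lambda>_. 0)")
      case True then show ?thesis using a tv_zero span_zero by simp
    next
      case False then show ?thesis using a dotR_Rx span_base by blast
    qed
  qed
qed

lemma iso_nonzero_shift: assumes s: "\<sigma> \<in> R0" shows "tv \<sigma> \<in> Hc"
proof -
  obtain \<alpha> where a: "\<alpha> \<in> Rx" "(\<lambda>x. \<sigma> x + \<alpha> x) \<in> Rt" using EA5[OF s] by blast
  have sH: "\<sigma> \<in> Hdual sc H" using s R0_Rt Rt_Hd by blast
  have aR: "\<alpha> \<in> Rt" using a(1) Rx_Rt by blast
  have aH: "\<alpha> \<in> Hdual sc H" using aR Rt_Hd by blast
  define g where "g = (\<lambda>x. \<sigma> x + \<alpha> x)"
  have gH: "g \<in> Hdual sc H" unfolding g_def using Hdual_comb[OF sH aH, of 1 1] by simp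
  have tg: "tv g = tv \<sigma> + tv \<alpha>"
  proof (rule tvec_eq[OF gH])
    show "tv \<sigma> + tv \<alpha> \<in> H" using tvec(1)[OF sH] tvec(1)[OF aH] subspace_add[OF H_sub] by blast
    show "\<forall>h\<in>H. g h = B h (tv \<sigma> + tv \<alpha>)" unfolding g_def using tvD[OF sH] tvD[OF aH] by (simp add: B_addR)
  qed
  have tsH: "tv \<sigma> \<in> H" using tvec(1)[OF sH] .
  have taH: "tv \<alpha> \<in> H" using tvec(1)[OF aH] .
  have Bss: "B (tv \<sigma>) (tv \<sigma>) = 0" using factA[OF s R0_Rt[THEN subsetD, OF s]] tvD[OF sH tsH] by simp
  have Bsa: "B (tv \<sigma>) (tv \<alpha>) = 0" using factA[OF s aR] tvD[OF aH tsH] by simp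
  have Bas: "B (tv \<alpha>) (tv \<sigma>) = 0" using Bsa B_sym by metis
  have "dform B H g g = dform B H \<alpha> \<alpha>" unfolding dform_def tg by (simp add: B_addL B_addR Bss Bsa Bas)
  moreover have "dform B H \<alpha> \<alpha> \<noteq> 0" using a(1) unfolding nonisotropic_roots_def by blast
  ultimately have "g \<in> Rx" using a(2) unfolding nonisotropic_roots_def g_def by simp
  then have "tv g \<in> Hc" by (intro span_base) blast
  moreover have "tv \<alpha> \<in> Hc" using a(1) by (intro span_base) blast
  ultimately have "tv g - tv \<alpha> \<in> Hc" by (rule span_diff)
  then show ?thesis using tg by simp
qed

lemma H0_Hc: "H0 \<subseteq> Hc"
  by (rule span_minimal[OF _ subspace_span]) (use iso_nonzero_shift in blast)

lemma Hc_cover: "Hc \<subseteq> ssum dotH H0"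
proof (rule span_minimal[OF _ ssum_sub[OF subspace_span subspace_span]])
  show "tv ` Rx \<subseteq> ssum dotH H0"
  proof
    fix t assume "t \<in> tv ` Rx"
    then obtain \<alpha> where a: "\<alpha> \<in> Rx" "t = tv \<alpha>" by blast
    have aR: "\<alpha> \<in> Rt" using a(1) Rx_Rt by blast
    have aH: "\<alpha> \<in> Hdual sc H" using aR Rt_Hd by blast
    obtain d where d: "d \<in> dotR" "(\<lambda>x. \<alpha> x - d x) \<in> rspan R0" using dotR_cover aR by blast
    obtain F c where Fc: "finite F" "F \<subseteq> R0" "(\<lambda>x. \<alpha> x - d x) = (\<lambda>x. \<Sum>\<sigma>\<in>F. complex_of_real (c \<sigma>) * \<sigma> x)"
      using d(2) unfolding rspan_def by blast
    have dH: "d \<in> Hdual sc H" using d(1) dotR_Hd by blast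
    have FH: "F \<subseteq> Hdual sc H" using Fc(2) R0_Rt Rt_Hd by blast
    define z where "z = (\<Sum>\<sigma>\<in>F. sc (complex_of_real (c \<sigma>)) (tv \<sigma>))"
    have zH0: "z \<in> H0" unfolding z_def using Fc(2) by (intro span_sum span_scale span_base) blast
    have zH: "z \<in> H" using zH0 H0_H by blast
    have "tv \<alpha> = tv d + z"
    proof (rule tvec_eq[OF aH])
      show "tv d + z \<in> H" using tvec(1)[OF dH] zH subspace_add[OF H_sub] by blast
      show "\<forall>h\<in>H. \<alpha> h = B h (tv d + z)"
      proof
        fix h assume h: "h \<in> H"
        have "\<alpha> h - d h = (\<Sum>\<sigma>\<in>F. complex_of_real (c \<sigma>) * \<sigma> h)" using fun_cong[OF Fc(3), of h] by simp
        also have "\<dots> = (\<Sum>\<sigma>\<in>F. complex_of_real (c \<sigma>) * B h (tv \<sigma>))"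
          using FH tvD h by (intro sum.cong) auto
        also have "\<dots> = B h z" unfolding z_def by (simp add: B_sumR B_scR)
        finally show "\<alpha> h = B h (tv d + z)" using tvD[OF dH h] by (simp add: B_addR algebra_simps)
      qed
    qed
    moreover have "tv d \<in> dotH" using d(1) by (intro span_base) blast
    ultimately show "t \<in> ssum dotH H0" using a(2) zH0 ssumI by metis
  qed
qed

end

context mctx begin

definition dr :: "(('a \<Rightarrow> complex) \<Rightarrow> real) \<Rightarrow> 'a" where
  "dr r = (\<Sum>a\<in>dotR. sc (complex_of_real (r a)) (tv a))"

lemma dr_in: "dr r \<in> dotH" unfolding dr_def by (intro span_sum span_scale span_base) blast

lemma pos_real: "B (dr r) (dr r) \<in> \<real> \<and> Re (B (dr r) (dr r)) \<ge> 0 \<and> (B (dr r) (dr r) = 0 \<longrightarrow> dr r = 0)"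
proof -
  define v where "v = (\<lambda>x. \<Sum>a\<in>dotR. complex_of_real (r a) * a x)"
  have vR: "v \<in> rspan dotR" unfolding rspan_def v_def using dotR_fin by blast
  have tvv: "tv v = dr r" unfolding v_def dr_def by (rule tv_sum[OF dotR_fin dotR_Hd])
  show ?thesis
  proof (cases "v = (\<lambda>_. 0)")
    case True
    then have "dr r = 0" using tvv tv_zero by simp
    then show ?thesis by simp
  next
    case False
    have "dform B H v v \<in> \<real> \<and> Re (dform B H v v) > 0" by (rule dotR_pos[OF vR False])
    then show ?thesis unfolding dform_def tvv by auto
  qed
qed

lemma dotH_nd: assumes d: "d \<in> dotH" and o: "\<forall>d'\<in>dotH. B d d' = 0" shows "d = 0"
proof -
  have fin: "finite (tv ` dotR)" using dotR_fin by simp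
  obtain u where u: "d = (\<Sum>t\<in>tv ` dotR. sc (u t) t)" using d span_finite[OF fin] by blast
  have inj: "inj_on tv dotR" using tv_inj dotR_Hd unfolding inj_on_def by blast
  define c where "c a = u (tv a)" for a
  have d1: "d = (\<Sum>a\<in>dotR. sc (c a) (tv a))" unfolding u c_def by (simp add: sum.reindex[OF inj])
  define r where "r a = Re (c a)" for a
  define q where "q a = Im (c a)" for a
  have ca: "c a = complex_of_real (r a) + \<i> * complex_of_real (q a)" for a
    unfolding r_def q_def by (rule complex_eq)
  have d2: "d = dr r + sc \<i> (dr q)"
    unfolding d1 dr_def ca scale_sum_right
    by (simp add: scale_left_distrib scale_scale sum.distrib)
  have d'in: "dr r - sc \<i> (dr q) \<in> dotH" using dr_in by (intro span_diff span_scale)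
  have "B d (dr r - sc \<i> (dr q)) = 0" using o d'in by blast
  moreover have "B d (dr r - sc \<i> (dr q)) = B (dr r) (dr r) + B (dr q) (dr q)"
    unfolding d2 by (simp add: B_addL B_diffR B_scL B_scR B_sym[of "dr q" "dr r"] algebra_simps)
  ultimately have sum0: "B (dr r) (dr r) + B (dr q) (dr q) = 0" by simp
  obtain X: "B (dr r) (dr r) \<in> \<real>" "Re (B (dr r) (dr r)) \<ge> 0" "B (dr r) (dr r) = 0 \<longrightarrow> dr r = 0"
    using pos_real by blast
  obtain Y: "B (dr q) (dr q) \<in> \<real>" "Re (B (dr q) (dr q)) \<ge> 0" "B (dr q) (dr q) = 0 \<longrightarrow> dr q = 0"
    using pos_real by blast
  have "Re (B (dr r) (dr r)) + Re (B (dr q) (dr q)) = 0" using arg_cong[OF sum0, of Re] by simp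
  then have "Re (B (dr r) (dr r)) = 0" "Re (B (dr q) (dr q)) = 0" using X(2) Y(2) by linarith+
  then have "B (dr r) (dr r) = 0" "B (dr q) (dr q) = 0"
    using of_real_Re[OF X(1)] of_real_Re[OF Y(1)] by (metis of_real_0)+
  then have "dr r = 0" "dr q = 0" using X(3) Y(3) by auto
  then show ?thesis using d2 by simp
qed

end

context mctx begin

abbreviation "U \<equiv> ssum Hc Hhat0"
abbreviation "Ec \<equiv> core sc br B H"
definition "K = {k \<in> H. \<forall>\<alpha>\<in>Rx. \<alpha> k = 0}"

lemma H0_dotH_orth: "z \<in> H0 \<Longrightarrow> d \<in> dotH \<Longrightarrow> B z d = 0"
proof (rule orth_span[of "tv ` R0" "tv ` dotR"])
  show "\<forall>s\<in>tv ` R0. \<forall>t\<in>tv ` dotR. B s t = 0"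
  proof (intro ballI)
    fix s t assume "s \<in> tv ` R0" "t \<in> tv ` dotR"
    then obtain \<sigma> a where sa: "\<sigma> \<in> R0" "a \<in> dotR" "s = tv \<sigma>" "t = tv a" by blast
    have aH: "a \<in> Hdual sc H" using sa(2) dotR_Hd by blast
    have sH: "\<sigma> \<in> Hdual sc H" using sa(1) R0_Rt Rt_Hd by blast
    have "a (tv \<sigma>) = 0" using factA[OF sa(1)] sa(2) dotR_sub by blast
    then show "B s t = 0" using tvD[OF aH tvec(1)[OF sH]] sa by simp
  qed
qed

lemma H0_H0_orth: "z \<in> H0 \<Longrightarrow> z' \<in> H0 \<Longrightarrow> B z z' = 0"
proof (rule orth_span[of "tv ` R0" "tv ` R0"])
  show "\<forall>s\<in>tv ` R0. \<forall>t\<in>tv ` R0. B s t = 0"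
  proof (intro ballI)
    fix s t assume "s \<in> tv ` R0" "t \<in> tv ` R0"
    then obtain \<sigma> a where sa: "\<sigma> \<in> R0" "a \<in> R0" "s = tv \<sigma>" "t = tv a" by blast
    have aH: "a \<in> Hdual sc H" using sa(2) R0_Rt Rt_Hd by blast
    have sH: "\<sigma> \<in> Hdual sc H" using sa(1) R0_Rt Rt_Hd by blast
    have "a (tv \<sigma>) = 0" using factA[OF sa(1)] sa(2) R0_Rt by blast
    then show "B s t = 0" using tvD[OF aH tvec(1)[OF sH]] sa by simp
  qed
qed

lemma Hhat0_dotH: "w \<in> Hhat0 \<Longrightarrow> d \<in> dotH \<Longrightarrow> B w d = 0"
  using Hhat0_orth unfolding orth_def by blast

lemma z_Hhat0: "0 \<in> Hhat0" using subspace_0[OF Hhat0_sub] .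

lemma U_sub: "subspace U" by (rule ssum_sub[OF subspace_span Hhat0_sub])
lemma U_H: "U \<subseteq> H"
proof
  fix x assume "x \<in> U"
  then obtain c w where "c \<in> Hc" "w \<in> Hhat0" "x = c + w" by (elim ssumE)
  then show "x \<in> H" using Hc_H Hhat0_H subspace_add[OF H_sub] by blast
qed
lemma Hc_U: "c \<in> Hc \<Longrightarrow> c \<in> U" using ssum_left z_Hhat0 by blast
lemma Hhat0_U: "w \<in> Hhat0 \<Longrightarrow> w \<in> U" using ssum_right span_zero by blast

lemma U_nd: assumes u: "u \<in> U" and o: "\<forall>u'\<in>U. B u u' = 0" shows "u = 0"
proof -
  obtain c w where cw: "c \<in> Hc" "w \<in> Hhat0" "u = c + w" using u by (elim ssumE)
  obtain d z where dz: "d \<in> dotH" "z \<in> H0" "c = d + z" using Hc_cover cw(1) by (blast elim: ssumE)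
  have "\<forall>d'\<in>dotH. B d d' = 0"
  proof
    fix d' assume d': "d' \<in> dotH"
    have "d' \<in> U" using d' dotH_Hc Hc_U by blast
    then have "B u d' = 0" using o by blast
    moreover have "B u d' = B d d' + B z d' + B w d'" using cw dz by (simp add: B_addL)
    moreover have "B z d' = 0" using H0_dotH_orth dz(2) d' by blast
    moreover have "B w d' = 0" using Hhat0_dotH cw(2) d' by blast
    ultimately show "B d d' = 0" by simp
  qed
  then have d0: "d = 0" using dotH_nd dz(1) by blast
  have uS: "u \<in> ssum H0 Hhat0" using cw dz d0 ssumI by simp
  have "\<forall>y\<in>ssum H0 Hhat0. B u y = 0"
  proof
    fix y assume "y \<in> ssum H0 Hhat0"
    then obtain z' w' where "z' \<in> H0" "w' \<in> Hhat0" "y = z' + w'" by (elim ssumE)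
    then have "y \<in> U" using H0_Hc ssumI by blast
    then show "B u y = 0" using o by blast
  qed
  then show ?thesis using Hhat0_nondeg uS by blast
qed

lemma Rx_nz: "\<alpha> \<in> Rx \<Longrightarrow> \<alpha> \<noteq> (\<lambda>_. 0)"
  unfolding nonisotropic_roots_def dform_def using tv_zero by auto

lemma core_Q: assumes k: "k \<in> K" and z: "z \<in> Ec" shows "B k z = 0 \<and> br k z = 0"
proof -
  define Q where "Q = {z. \<forall>k\<in>K. B k z = 0 \<and> br k z = 0}"
  have KH: "k \<in> H" if "k \<in> K" for k using that unfolding K_def by blast
  have sub: "subspace Q" unfolding subspace_def Q_def by (auto simp: B_addR B_scR br_addR br_scR)
  have brc: "br z1 z2 \<in> Q" if "z1 \<in> Q" "z2 \<in> Q" for z1 z2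
  proof -
    have "B k (br z1 z2) = 0 \<and> br k (br z1 z2) = 0" if "k \<in> K" for k
    proof
      have a: "B k z1 = 0 \<and> br k z1 = 0" "B k z2 = 0 \<and> br k z2 = 0"
        using \<open>z1 \<in> Q\<close> \<open>z2 \<in> Q\<close> that unfolding Q_def by blast+
      have "B k (br z1 z2) = B (br k z1) z2" by (simp add: B_inv)
      then show "B k (br z1 z2) = 0" using a by simp
      have "br k (br z1 z2) = br (br k z1) z2 + br z1 (br k z2)" by (rule br_deriv)
      then show "br k (br z1 z2) = 0" using a by simp
    qed
    then show ?thesis unfolding Q_def by blast
  qed
  have sa: "subalgebra sc br Q" unfolding subalgebra_def using sub brc by blast
  have gens: "(\<Union>\<alpha>\<in>Rx. rootsp sc br H \<alpha>) \<subseteq> Q"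
  proof
    fix z assume "z \<in> (\<Union>\<alpha>\<in>Rx. rootsp sc br H \<alpha>)"
    then obtain \<alpha> where a: "\<alpha> \<in> Rx" "z \<in> rootsp sc br H \<alpha>" by blast
    have aH: "\<alpha> \<in> Hdual sc H" using a(1) Rx_Rt Rt_Hd by blast
    have "B k z = 0 \<and> br k z = 0" if "k \<in> K" for k
    proof
      have kH: "k \<in> H" using KH that .
      have "\<alpha> k = 0" using that a(1) unfolding K_def by blast
      then show "br k z = 0" using rootspD[OF a(2) kH] by simp
      have kr: "k \<in> rootsp sc br H (\<lambda>_. 0)" using kH rootsp0 by simp
      have ne: "(\<lambda>x. 0 + \<alpha> x) \<noteq> (\<lambda>_. 0)" using Rx_nz[OF a(1)] by simp
      show "B k z = 0" by (rule B_root_orth[OF Hdual_zero aH kr a(2) ne])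
    qed
    then show "z \<in> Q" unfolding Q_def by blast
  qed
  have "Ec \<subseteq> Q" unfolding core_def using sa gens by blast
  then show ?thesis using z k unfolding Q_def by blast
qed

lemma K_core: assumes k: "k \<in> K" shows "k \<in> Ec"
proof -
  have "k \<in> orth B UNIV Ec" unfolding orth_def using core_Q[OF k] by blast
  then have "k \<in> centre br Ec" using tame unfolding tame_def by blast
  then show ?thesis unfolding centre_def by blast
qed

lemma K_iso: "k \<in> K \<Longrightarrow> k' \<in> K \<Longrightarrow> B k k' = 0"
  using core_Q K_core by blast

lemma perpU_K: assumes p: "p \<in> H" "\<forall>w\<in>U. B w p = 0" shows "p \<in> K"
  unfolding K_def
proof (intro CollectI conjI ballI)
  show "p \<in> H" using p(1) .
  fix \<alpha> assume a: "\<alpha> \<in> Rx"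
  have aH: "\<alpha> \<in> Hdual sc H" using a Rx_Rt Rt_Hd by blast
  have "tv \<alpha> \<in> U" using a by (intro Hc_U span_base) blast
  then have "B (tv \<alpha>) p = 0" using p(2) by blast
  then show "\<alpha> p = 0" using tvD[OF aH p(1)] B_sym by metis
qed

lemma U_decomp: assumes y: "y \<in> H" shows "\<exists>u\<in>U. \<forall>w\<in>U. B w y = B w u"
proof -
  obtain G where G: "finite G" "G \<subseteq> U" "span G = U" using fin_span_subspace[OF U_sub U_H] by blast
  have "\<exists>u\<in>span G. \<forall>w\<in>span G. B w y = B w u"
  proof (rule riesz[OF G(1)])
    show "\<forall>w\<in>span G. (\<forall>w'\<in>span G. B w w' = 0) \<longrightarrow> w = 0" using U_nd G(3) by simp
    show "\<forall>x\<in>span G. \<forall>z\<in>span G. B (x + z) y = B x y + B z y" by (simp add: B_addL)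
    show "\<forall>c. \<forall>x\<in>span G. B (sc c x) y = c * B x y" by (simp add: B_scL)
  qed
  then show ?thesis using G(3) by simp
qed

lemma main_res: "orth B H U = {0} \<and> ssum U Ec = ssum H Ec"
proof -
  have split: "\<exists>u\<in>U. y - u \<in> H \<and> (\<forall>w\<in>U. B w (y - u) = 0)" if y: "y \<in> H" for y
  proof -
    obtain u where u: "u \<in> U" "\<forall>w\<in>U. B w y = B w u" using U_decomp[OF y] by blast
    have "y - u \<in> H" using y u(1) U_H subspace_diff[OF H_sub] by blast
    moreover have "\<forall>w\<in>U. B w (y - u) = 0" using u(2) by (simp add: B_diffR)
    ultimately show ?thesis using u(1) by blast
  qed
  have orth0: "x = 0" if x: "x \<in> orth B H U" for x
  proof -
    have xH: "x \<in> H" and xo: "\<forall>w\<in>U. B x w = 0" using x unfolding orth_def by auto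
    have xK: "x \<in> K" using perpU_K[OF xH] xo B_sym by metis
    have "\<forall>h\<in>H. B h x = 0"
    proof
      fix y assume y: "y \<in> H"
      obtain u where u: "u \<in> U" "y - u \<in> H" "\<forall>w\<in>U. B w (y - u) = 0" using split[OF y] by blast
      have pK: "y - u \<in> K" using perpU_K u(2,3) by blast
      have "B x y = B x u + B x (y - u)" by (simp add: B_diffR)
      also have "\<dots> = 0" using xo u(1) K_iso[OF xK pK] by simp
      finally show "B y x = 0" using B_sym[of y x] by simp
    qed
    then show "x = 0" using H_nd xH by blast
  qed
  have z: "0 \<in> orth B H U" unfolding orth_def using subspace_0[OF H_sub] by simp
  have o: "orth B H U = {0}" using orth0 z by blast
  have "H \<subseteq> U"
  proof
    fix y assume y: "y \<in> H"
    obtain u where u: "u \<in> U" "y - u \<in> H" "\<forall>w\<in>U. B w (y - u) = 0" using split[OF y] by blast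
    have "\<forall>w\<in>U. B (y - u) w = 0" using u(3) B_sym[of "y - u"] by simp
    then have "y - u \<in> orth B H U" unfolding orth_def using u(2) by blast
    then have "y - u = 0" using o by blast
    then show "y \<in> U" using u(1) by simp
  qed
  then have "U = H" using U_H by blast
  then show ?thesis using o by simp
qed

end

theorem lemma4p7:
  fixes sc :: "complex \<Rightarrow> 'a::ab_group_add \<Rightarrow> 'a"
    and br :: "'a \<Rightarrow> 'a \<Rightarrow> 'a"
    and B :: "'a \<Rightarrow> 'a \<Rightarrow> complex"
    and H :: "'a set"
    and dotR :: "('a \<Rightarrow> complex) set"
    and Hhat0 :: "'a set"
  defines "R \<equiv> roots sc br H"
    and "Rx \<equiv> nonisotropic_roots sc br B H"
    and "R0 \<equiv> isotropic_roots sc br B H"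
    and "V0 \<equiv> rspan (isotropic_roots sc br B H)"
    and "dotH \<equiv> module.span sc (tvec B H ` dotR)"
    and "Hc \<equiv> module.span sc (tvec B H ` nonisotropic_roots sc br B H)"
    and "H0 \<equiv> module.span sc (tvec B H ` isotropic_roots sc br B H)"
    and "Ec \<equiv> core sc br B H"
  assumes eala: "EALA sc br B H"
    and reduced: "\<forall>\<alpha>\<in>R. \<forall>\<beta>\<in>R. \<alpha> \<notin> V0 \<longrightarrow> (\<lambda>x. \<beta> x - 2 * \<alpha> x) \<notin> V0"
    and dotR_sub: "dotR \<subseteq> R"
    and dotR_zero: "(\<lambda>_. 0) \<in> dotR"
    and dotR_rs: "finite_root_system B H dotR"
    and dotR_cover: "\<forall>\<alpha>\<in>R. \<exists>a\<in>dotR. (\<lambda>x. \<alpha> x - a x) \<in> V0"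
    and dotR_inj: "\<forall>a\<in>dotR. \<forall>b\<in>dotR. (\<lambda>x. a x - b x) \<in> V0 \<longrightarrow> a = b"
    and Hhat0_sub: "module.subspace sc Hhat0"
    and Hhat0_orth: "Hhat0 \<subseteq> orth B H dotH"
    and Hhat0_dim: "vector_space.dim sc Hhat0 = vector_space.dim sc H0"
    and Hhat0_iso: "\<forall>x\<in>Hhat0. \<forall>y\<in>Hhat0. B x y = 0"
    and Hhat0_direct: "H0 \<inter> Hhat0 = {0}"
    and Hhat0_nondeg: "\<forall>x\<in>ssum H0 Hhat0. (\<forall>y\<in>ssum H0 Hhat0. B x y = 0) \<longrightarrow> x = 0"
    and tame: "tame sc br B H"
  shows "orth B H (ssum Hc Hhat0) = {0} \<and> ssum (ssum Hc Hhat0) Ec = ssum H Ec"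
  proof -
  have lie: "lie_algebra sc br" using eala unfolding EALA_def by (elim conjE) assumption
  have vs: "vector_space sc" using lie unfolding lie_algebra_def by (elim conjE) assumption
  have ect: "ectx sc br B H" by (rule ectx.intro[OF vs]) (rule ectx_axioms.intro[OF eala])
  have mc: "mctx sc br B H dotR Hhat0"
  proof (rule mctx.intro[OF ect], rule mctx_axioms.intro)
    show "dotR \<subseteq> roots sc br H" using dotR_sub unfolding R_def .
    show "finite_root_system B H dotR" by (rule dotR_rs)
    show "\<forall>\<alpha>\<in>roots sc br H. \<exists>a\<in>dotR. (\<lambda>x. \<alpha> x - a x) \<in> rspan (isotropic_roots sc br B H)"
      using dotR_cover unfolding R_def V0_def .
    show "module.subspace sc Hhat0" by (rule Hhat0_sub)
    show "Hhat0 \<subseteq> orth B H (module.span sc (tvec B H ` dotR))" using Hhat0_orth unfolding dotH_def .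
    show "\<forall>x\<in>ssum (module.span sc (tvec B H ` isotropic_roots sc br B H)) Hhat0.
        (\<forall>y\<in>ssum (module.span sc (tvec B H ` isotropic_roots sc br B H)) Hhat0. B x y = 0) \<longrightarrow> x = 0"
      using Hhat0_nondeg unfolding H0_def .
    show "tame sc br B H" by (rule tame)
  qed
  interpret m: mctx sc br B H dotR Hhat0 by (rule mc)
  have "orth B H m.U = {0} \<and> ssum m.U m.Ec = ssum H m.Ec" by (rule m.main_res)
  then show ?thesis unfolding Hc_def Ec_def .
qed

end
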